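(* Consider the following family of Block MDPs with horizon $H$ and actions $\{0,1\}$. The policy class $\Pi$ consists of all open-loop policies $\pi\leftrightarrow(a_1,\dots,a_H)\in\{0,1\}^H$, $\pi_h(x)\equiv a_h$. For $\pi^\star\in\Pi$ and $\phi\in\Phi$, the MDP $M_{\pi^\star,\phi}$ has latent states $\mathcal{S}_h=\{g_h,b_h\}$, initial latent state $g_1$, latent transitions $g_h\to g_{h+1}$ if $a=\pi^\star_h$ and every other pair $(s,a)\to b_{h+1}$, and deterministic reward $\mathbb{1}\{s=g_H,a=\pi^\star_H\}$ (zero reward at layers $h<H$). The observation space is $\mathcal{X}_h=\{x_h^{(1)},\dots,x_h^{(m)}\}$ with $m=2^{2H}$; $\Phi$ is the set of decoders $\phi:\mathcal{X}\to\mathcal{S}$ with $\phi(x)=g_1$ for all $x\in\mathcal{X}_1$ and, for every $h\ge2$, exactly $2^H$ observations of $\mathcal{X}_h$ mapped to $g_h$ and the rest to $b_h$; the emission is $\psi(s)=\mathrm{Unif}\{x:\phi(x)=s\}$. Let $\Theta_0=\{(\pi^\star,\phi):\pi^\star_H=0,\phi\in\Phi\}$ and $\Theta_1=\{(\pi^\star,\phi):\pi^\star_H=1,\phi\in\Phi\}$. Let $T=2^{O(H)}$. Then for any deterministic algorithm $\mathsf{Alg}$ that adaptively collects $HT$ samples via generative access, $$D_{\mathrm{TV}}\big(\Pr^{\mathrm{Unif}(\Theta_0),\mathsf{Alg}},\Pr^{\mathrm{Unif}(\Theta_1),\mathsf{Alg}}\big)\le\frac{T^4H}{2^{H-9}}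.$$
   Context: Generative access: the learner may query any $(x,a)\in\mathcal{X}_h\times\{0,1\}$ and receives $x'\sim P(\cdot\mid x,a)=\psi\circ P_{\mathrm{lat}}(\cdot\mid\phi(x),a)$ and reward $r\sim R(x,a)$. Convention: $\mathsf{Alg}$ operates in $T$ rounds, and in each round queries one pair at layer $1$, then layer $2$, ..., then layer $H$ (so $HT$ queries). $\mathsf{Alg}$ is deterministic: each query and its final output policy are deterministic functions of previously observed data. For $\nu\in\Delta(\Theta)$, $\Pr^{\nu,\mathsf{Alg}}$ is the joint law of all queries, responses and the returned policy when $\theta\sim\nu$ is drawn and then $\mathsf{Alg}$ interacts with $M_\theta$. $D_{\mathrm{TV}}$ is total variation distance. *)

theory Defs
  imports "HOL-Probability.Probability"
begin

text \<open>Layers are 1..H. Observation x_h^(i+1) of layer h is encoded by its index i < 2^(2H)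
  (the layer is implicit from the position of the query). Actions 0/1 are False/True.
  A parameter theta = (pstar, G): pstar h is the action of the optimal open-loop policy at
  layer h; G h is the set of observation indices of layer h decoded to g_h (h >= 2);
  all observations of layer 1 decode to g_1.\<close>

type_synonym param = "(nat \<Rightarrow> bool) \<times> (nat \<Rightarrow> nat set)"
type_synonym query = "nat \<times> bool"
type_synonym response = "nat \<times> bool"   \<comment> \<open>(next observation index, reward)\<close>
type_synonym history = "(query \<times> response) list"

definition nobs :: "nat \<Rightarrow> nat" where
  "nobs H = 2 ^ (2 * H)"

text \<open>Theta_b: pstar with pstar H = b, and decoder in Phi (layers 2..H: exactly 2^H good obs).
  Values outside the relevant layers are fixed to canonical defaults.\<close>
definition Theta :: "nat \<Rightarrow> bool \<Rightarrow> param set" where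
  "Theta H b = {(pstar, G).
      (\<forall>h. h \<notin> {1..H} \<longrightarrow> pstar h = False) \<and> pstar H = b \<and>
      (\<forall>h. h \<notin> {2..H} \<longrightarrow> G h = {}) \<and>
      (\<forall>h\<in>{2..H}. G h \<subseteq> {..<nobs H} \<and> card (G h) = 2 ^ H)}"

text \<open>For h < H: next latent is g_{h+1} iff current latent is g_h and a = pstar h; next observation is
  uniform over the observations of layer h+1 with that latent; reward 0.
  For h = H: reward 1{s = g_H, a = pstar H}; there is no next layer (dummy observation 0).\<close>
definition resp :: "nat \<Rightarrow> param \<Rightarrow> nat \<Rightarrow> query \<Rightarrow> response pmf" where
  "resp H \<theta> h qa =
     (let pstar = fst \<theta>; G = snd \<theta>; i = fst qa; a = snd qa;
          good = (if h = 1 then True else i \<in> G h)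
      in if h < H then
           map_pmf (\<lambda>j. (j, False))
             (pmf_of_set {j. j < nobs H \<and> (j \<in> G (Suc h)) = (good \<and> a = pstar h)})
         else return_pmf (0, good \<and> a = pstar h))"

text \<open>Law of the first k query/response pairs of the deterministic algorithm q interacting with
  M_theta; step k (0-based) queries layer (k mod H) + 1, so T rounds = H*T steps.\<close>
primrec run :: "nat \<Rightarrow> (history \<Rightarrow> query) \<Rightarrow> param \<Rightarrow> nat \<Rightarrow> history pmf" where
  "run H q \<theta> 0 = return_pmf []"
| "run H q \<theta> (Suc k) =
     bind_pmf (run H q \<theta> k)
       (\<lambda>hs. map_pmf (\<lambda>r. hs @ [(q hs, r)]) (resp H \<theta> (k mod H + 1) (q hs)))"

text \<open>Joint law Pr^{nu,Alg} of all queries, responses and the returned (open-loop) policy,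
  for theta drawn from nu.\<close>
definition law :: "nat \<Rightarrow> nat \<Rightarrow> (history \<Rightarrow> query) \<Rightarrow> (history \<Rightarrow> bool list) \<Rightarrow> param pmf
                   \<Rightarrow> (history \<times> bool list) pmf" where
  "law H T q out \<nu> = bind_pmf \<nu> (\<lambda>\<theta>. map_pmf (\<lambda>hs. (hs, out hs)) (run H q \<theta> (H * T)))"

definition dTV :: "'a pmf \<Rightarrow> 'a pmf \<Rightarrow> real" where
  "dTV p q = (SUP A. \<bar>measure_pmf.prob p A - measure_pmf.prob q A\<bar>)"

end

theory Submission
  imports Defs
begin


definition tr :: "nat \<Rightarrow> nat \<Rightarrow> nat \<Rightarrow> nat" where
  "tr r r' x = (if x = r then r' else if x = r' then r else x)"

lemma tr_tr[simp]: "tr r r' (tr r r' x) = x" unfolding tr_def by auto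

lemma tr_inj: "inj (tr r r')" by (metis injI tr_tr)

lemma mem_tr_image: "y \<in> tr r r' ` G \<longleftrightarrow> tr r r' y \<in> G"
  by (metis image_iff tr_tr)

lemma nobs_eq: "nobs H = 4^H" unfolding nobs_def by (simp add: power_mult)

lemma K_le: "H \<ge> 1 \<Longrightarrow> 2 * 2^H \<le> nobs H"
proof -
  assume "H \<ge> 1"
  have "(2::nat)^H * 2^H = 4^H" by (simp add: power_mult_distrib[symmetric])
  moreover have "2 \<le> (2::nat)^H" using \<open>H \<ge> 1\<close>
    by (metis power_one_right power_increasing le_numeral_extra(4) one_le_numeral)
  ultimately show ?thesis unfolding nobs_eq by (metis mult_le_mono1 mult.commute)
qed

lemma Theta_memD:
  assumes "(p, G) \<in> Theta H b"
  shows "\<And>h. h \<notin> {1..H} \<Longrightarrow> p h = False" "p H = b" "\<And>h. h \<notin> {2..H} \<Longrightarrow> G h = {}"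
    "\<And>h. h \<in> {2..H} \<Longrightarrow> G h \<subseteq> {..<nobs H}" "\<And>h. h \<in> {2..H} \<Longrightarrow> card (G h) = 2^H"
  using assms unfolding Theta_def by auto

lemma Theta_fin: "finite (Theta H b)"
proof -
  let ?P = "(\<lambda>S. \<lambda>h. h \<in> S) ` Pow {1..H}"
  let ?G = "(\<lambda>R. \<lambda>h. {x. (h, x) \<in> R}) ` Pow ({2..H} \<times> {..<nobs H})"
  have "Theta H b \<subseteq> ?P \<times> ?G"
  proof
    fix th assume th: "th \<in> Theta H b"
    obtain p G where e: "th = (p, G)" by fastforce
    have "p = (\<lambda>h. h \<in> {h \<in> {1..H}. p h})" using Theta_memD(1)[of p G] th e by fastforce
    hence pP: "p \<in> ?P" by blast
    have "G = (\<lambda>h. {x. (h, x) \<in> {(h, x). h \<in> {2..H} \<and> x \<in> G h}})"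
      using Theta_memD(3)[of p G] th e by fastforce
    moreover have "{(h, x). h \<in> {2..H} \<and> x \<in> G h} \<subseteq> {2..H} \<times> {..<nobs H}"
      using Theta_memD(4)[of p G] th e by fastforce
    ultimately have "G \<in> ?G" by blast
    thus "th \<in> ?P \<times> ?G" using e pP by blast
  qed
  thus ?thesis by (rule finite_subset) auto
qed

lemma Theta_ne: assumes "H \<ge> 1" shows "Theta H b \<noteq> {}"
proof -
  let ?p = "\<lambda>h. h = H \<and> b"
  let ?G = "\<lambda>h. if h \<in> {2..H} then {..<(2::nat)^H} else {}"
  have "2^H \<le> nobs H" using K_le[OF assms] by linarith
  hence "(?p, ?G) \<in> Theta H b" unfolding Theta_def using assms by auto
  thus ?thesis by blast
qed


lemma run_support:
  "hs \<in> set_pmf (run H q \<theta> k) \<longleftrightarrow> length hs = k \<and>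
     (\<forall>j<k. fst (hs!j) = q (take j hs) \<and> snd (hs!j) \<in> set_pmf (resp H \<theta> (j mod H + 1) (fst (hs!j))))"
proof (induction k arbitrary: hs)
  case 0
  then show ?case by auto
next
  case (Suc k)
  show ?case
  proof
    assume "hs \<in> set_pmf (run H q \<theta> (Suc k))"
    then obtain hs0 r where h0: "hs0 \<in> set_pmf (run H q \<theta> k)" and r: "r \<in> set_pmf (resp H \<theta> (k mod H + 1) (q hs0))"
      and e: "hs = hs0 @ [(q hs0, r)]" by auto
    from h0 Suc.IH have l: "length hs0 = k" and P: "\<forall>j<k. fst (hs0!j) = q (take j hs0) \<and> snd (hs0!j) \<in> set_pmf (resp H \<theta> (j mod H + 1) (fst (hs0!j)))"
      by auto
    show "length hs = Suc k \<and> (\<forall>j<Suc k. fst (hs!j) = q (take j hs) \<and> snd (hs!j) \<in> set_pmf (resp H \<theta> (j mod H + 1) (fst (hs!j))))"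
    proof (rule conjI)
      show "length hs = Suc k" using e l by simp
      show "\<forall>j<Suc k. fst (hs!j) = q (take j hs) \<and> snd (hs!j) \<in> set_pmf (resp H \<theta> (j mod H + 1) (fst (hs!j)))"
      proof (intro allI impI)
      fix j assume j: "j < Suc k"
      show "fst (hs!j) = q (take j hs) \<and> snd (hs!j) \<in> set_pmf (resp H \<theta> (j mod H + 1) (fst (hs!j)))"
      proof (cases "j < k")
        case True
        then show ?thesis using P e l by (simp add: nth_append)
          (metis P True)
      next
        case False
        hence "j = k" using j by simp
        then show ?thesis using e l r by (simp add: nth_append)
      qed
      qed
    qed
  next
    assume A: "length hs = Suc k \<and> (\<forall>j<Suc k. fst (hs!j) = q (take j hs) \<and> snd (hs!j) \<in> set_pmf (resp H \<theta> (j mod H + 1) (fst (hs!j))))"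
    then obtain hs0 x where e: "hs = hs0 @ [x]" by (metis length_Suc_conv_rev)
    with A have l: "length hs0 = k" by simp
    have "hs0 \<in> set_pmf (run H q \<theta> k)" unfolding Suc.IH
    proof (rule conjI[OF l], intro allI impI)
      fix j assume j: "j < k"
      hence "fst (hs!j) = q (take j hs) \<and> snd (hs!j) \<in> set_pmf (resp H \<theta> (j mod H + 1) (fst (hs!j)))"
        using A by (metis less_SucI)
      thus "fst (hs0!j) = q (take j hs0) \<and> snd (hs0!j) \<in> set_pmf (resp H \<theta> (j mod H + 1) (fst (hs0!j)))"
        using j e l by (simp add: nth_append) metis
    qed
    moreover have "fst x = q hs0" "snd x \<in> set_pmf (resp H \<theta> (k mod H + 1) (q hs0))"
      using A e l by (auto simp: nth_append dest: spec[of _ k])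
    ultimately show "hs \<in> set_pmf (run H q \<theta> (Suc k))" using e
      by (auto intro!: bexI[of _ hs0] bexI[of _ "snd x"] simp: prod_eq_iff)
  qed
qed

lemma pmf_run_len: "length hs \<noteq> k \<Longrightarrow> pmf (run H q \<theta> k) hs = 0"
  by (metis run_support set_pmf_iff)

lemma pmf_run_Suc:
  "pmf (run H q \<theta> (Suc k)) (hs @ [x]) =
     pmf (run H q \<theta> k) hs * (if fst x = q hs then pmf (resp H \<theta> (k mod H + 1) (q hs)) (snd x) else 0)"
proof -
  define c where "c = (if fst x = q hs then pmf (resp H \<theta> (k mod H + 1) (q hs)) (snd x) else 0)"
  have eq: "(\<lambda>y. pmf (map_pmf (\<lambda>r. y @ [(q y, r)]) (resp H \<theta> (k mod H + 1) (q y))) (hs @ [x]))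
        = (\<lambda>y. indicator {hs} y * c)"
  proof
    fix y
    show "pmf (map_pmf (\<lambda>r. y @ [(q y, r)]) (resp H \<theta> (k mod H + 1) (q y))) (hs @ [x]) = indicator {hs} y * c"
    proof (cases "y = hs \<and> fst x = q hs")
      case True
      have inj: "inj (\<lambda>r. hs @ [(q hs, r)])" by (auto intro: injI)
      have "hs @ [x] = hs @ [(q hs, snd x)]" using True by (cases x) auto
      then show ?thesis using True pmf_map_inj'[OF inj, of "resp H \<theta> (k mod H + 1) (q hs)" "snd x"] unfolding c_def by simp
    next
      case False
      have "hs @ [x] \<notin> (\<lambda>r. y @ [(q y, r)]) ` set_pmf (resp H \<theta> (k mod H + 1) (q y))"
        using False by (cases x) auto
      hence "pmf (map_pmf (\<lambda>r. y @ [(q y, r)]) (resp H \<theta> (k mod H + 1) (q y))) (hs @ [x]) = 0"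
        by (simp add: pmf_map_outside)
      then show ?thesis using False unfolding c_def by (auto simp: indicator_def)
    qed
  qed
  have "pmf (run H q \<theta> (Suc k)) (hs @ [x]) = measure_pmf.expectation (run H q \<theta> k) (\<lambda>y. indicator {hs} y * c)"
    by (simp add: pmf_bind eq[symmetric])
  also have "\<dots> = pmf (run H q \<theta> k) hs * c"
    by (simp add: measure_pmf_single)
  finally show ?thesis unfolding c_def .
qed

lemma map_take_run: "k \<le> n \<Longrightarrow> map_pmf (take k) (run H q \<theta> n) = run H q \<theta> k"
proof (induction n)
  case 0
  then show ?case by simp
next
  case (Suc n)
  show ?case
  proof (cases "k = Suc n")
    case True
    have "map_pmf (take k) (run H q \<theta> (Suc n)) = map_pmf id (run H q \<theta> (Suc n))"
      by (rule map_pmf_cong) (auto simp: True run_support)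
    then show ?thesis using True by simp
  next
    case False
    hence kn: "k \<le> n" using Suc by simp
    have "map_pmf (take k) (run H q \<theta> (Suc n)) =
      bind_pmf (run H q \<theta> n) (\<lambda>hs. map_pmf (take k) (map_pmf (\<lambda>r. hs @ [(q hs, r)]) (resp H \<theta> (n mod H + 1) (q hs))))"
      by (simp add: map_bind_pmf)
    also have "\<dots> = bind_pmf (run H q \<theta> n) (\<lambda>hs. return_pmf (take k hs))"
    proof (rule bind_pmf_cong[OF refl])
      fix hs assume "hs \<in> set_pmf (run H q \<theta> n)"
      hence "length hs = n" by (simp add: run_support)
      hence "\<And>r. take k (hs @ [(q hs, r)]) = take k hs" using kn by simp
      thus "map_pmf (take k) (map_pmf (\<lambda>r. hs @ [(q hs, r)]) (resp H \<theta> (n mod H + 1) (q hs))) = return_pmf (take k hs)"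
        by (simp add: pmf.map_comp o_def)
    qed
    also have "\<dots> = map_pmf (take k) (run H q \<theta> n)" by (simp add: map_pmf_def)
    finally show ?thesis using Suc.IH kn by simp
  qed
qed


locale L =
  fixes H T :: nat and q :: "history \<Rightarrow> query"
  assumes H2: "2 \<le> H" and qN: "\<And>hs. fst (q hs) < nobs H"
begin

abbreviation "N \<equiv> nobs H"
abbreviation "K \<equiv> (2::nat)^H"

lemma KN: "2 * K \<le> N" using K_le H2 by simp
lemma Kpos: "K > 0" by simp

definition Pr :: "param \<Rightarrow> history \<Rightarrow> real" where
  "Pr \<theta> hs = pmf (run H q \<theta> (length hs)) hs"

definition cons :: "history \<Rightarrow> bool" where
  "cons hs = (\<forall>j<length hs. fst (hs!j) = q (take j hs))"

definition ty :: "param \<Rightarrow> nat \<Rightarrow> query \<Rightarrow> bool" where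
  "ty \<theta> h qa = ((h = 1 \<or> fst qa \<in> snd \<theta> h) \<and> snd qa = fst \<theta> h)"

lemma cons_snoc: "cons (hs @ [x]) \<longleftrightarrow> cons hs \<and> fst x = q hs"
  unfolding cons_def by (auto simp: nth_append less_Suc_eq) 

lemma Pr_snoc: "Pr \<theta> (hs @ [x]) = Pr \<theta> hs * (if fst x = q hs then pmf (resp H \<theta> (length hs mod H + 1) (q hs)) (snd x) else 0)"
  unfolding Pr_def by (simp add: pmf_run_Suc[simplified])

lemma Pr_prod: "Pr \<theta> hs = (if cons hs then (\<Prod>j<length hs. pmf (resp H \<theta> (j mod H + 1) (fst (hs!j))) (snd (hs!j))) else 0)"
proof (induction hs rule: rev_induct)
  case Nil
  then show ?case by (simp add: Pr_def cons_def)
next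
  case (snoc x hs)
  show ?case
  proof (cases "cons (hs @ [x])")
    case True
    hence c: "cons hs" "fst x = q hs" using cons_snoc by auto
    have "(\<Prod>j<length (hs@[x]). pmf (resp H \<theta> (j mod H + 1) (fst ((hs@[x])!j))) (snd ((hs@[x])!j)))
        = (\<Prod>j<length hs. pmf (resp H \<theta> (j mod H + 1) (fst ((hs@[x])!j))) (snd ((hs@[x])!j))) * pmf (resp H \<theta> (length hs mod H + 1) (fst x)) (snd x)"
      by simp
    also have "(\<Prod>j<length hs. pmf (resp H \<theta> (j mod H + 1) (fst ((hs@[x])!j))) (snd ((hs@[x])!j)))
        = (\<Prod>j<length hs. pmf (resp H \<theta> (j mod H + 1) (fst (hs!j))) (snd (hs!j)))"
      by (rule prod.cong) (auto simp: nth_append)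
    finally have "(\<Prod>j<length (hs@[x]). pmf (resp H \<theta> (j mod H + 1) (fst ((hs@[x])!j))) (snd ((hs@[x])!j)))
        = (\<Prod>j<length hs. pmf (resp H \<theta> (j mod H + 1) (fst (hs!j))) (snd (hs!j))) * pmf (resp H \<theta> (length hs mod H + 1) (fst x)) (snd x)" .
    note eq = this
    have "Pr \<theta> (hs @ [x]) = Pr \<theta> hs * pmf (resp H \<theta> (length hs mod H + 1) (fst x)) (snd x)"
      using Pr_snoc c by simp
    also have "\<dots> = (\<Prod>j<length hs. pmf (resp H \<theta> (j mod H + 1) (fst (hs!j))) (snd (hs!j))) * pmf (resp H \<theta> (length hs mod H + 1) (fst x)) (snd x)"
      using snoc.IH c(1) by simp
    also have "\<dots> = (\<Prod>j<length (hs@[x]). pmf (resp H \<theta> (j mod H + 1) (fst ((hs@[x])!j))) (snd ((hs@[x])!j)))"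
      using eq by (rule sym)
    finally show ?thesis by (simp only: True if_True)
  next
    case False
    then show ?thesis using snoc Pr_snoc cons_snoc by auto
  qed
qed

lemma Pr_nonneg: "Pr \<theta> hs \<ge> 0" unfolding Pr_def by simp

lemma card_G: "\<theta> \<in> Theta H b \<Longrightarrow> h \<in> {2..H} \<Longrightarrow> card (snd \<theta> h) = K"
  using Theta_memD(5)[of "fst \<theta>" "snd \<theta>"] by auto
lemma sub_G: "\<theta> \<in> Theta H b \<Longrightarrow> h \<in> {2..H} \<Longrightarrow> snd \<theta> h \<subseteq> {..<N}"
  using Theta_memD(4)[of "fst \<theta>" "snd \<theta>"] by auto

lemma card_A:
  assumes "\<theta> \<in> Theta H b" "l \<in> {2..H}"
  shows "card {j. j < N \<and> (j \<in> snd \<theta> l) = c} = (if c then K else N - K)"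
proof (cases c)
  case True
  have "{j. j < N \<and> (j \<in> snd \<theta> l) = c} = snd \<theta> l" using sub_G[OF assms] True by auto
  then show ?thesis using card_G[OF assms] True by simp
next
  case False
  have "{j. j < N \<and> (j \<in> snd \<theta> l) = c} = {..<N} - snd \<theta> l" using False by auto
  then show ?thesis using card_G[OF assms] False sub_G[OF assms] by (simp add: card_Diff_subset finite_subset)
qed

lemma resp_lt:
  assumes th: "\<theta> \<in> Theta H b" and h: "1 \<le> h" "h < H"
  shows "pmf (resp H \<theta> h qa) rr = (if \<not> snd rr \<and> fst rr < N \<and> (fst rr \<in> snd \<theta> (Suc h)) = ty \<theta> h qa
     then 1 / real (if ty \<theta> h qa then K else N - K) else 0)"
proof -
  define A where "A = {j. j < N \<and> (j \<in> snd \<theta> (Suc h)) = ty \<theta> h qa}"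
  have cA: "card A = (if ty \<theta> h qa then K else N - K)" unfolding A_def using card_A[OF th] h by simp
  have fA: "finite A" unfolding A_def by simp
  have K1: "K \<ge> 1" by simp
  have "card A \<noteq> 0" using cA KN K1 by (cases "ty \<theta> h qa"; simp; linarith)
  hence neA: "A \<noteq> {}" by auto
  have r: "resp H \<theta> h qa = map_pmf (\<lambda>j. (j, False)) (pmf_of_set A)"
    unfolding resp_def A_def ty_def Let_def using h by (simp cong: conj_cong)
  have inj: "inj (\<lambda>j::nat. (j, False))" by (auto intro: injI)
  show ?thesis
  proof (cases "snd rr")
    case True
    hence "rr \<notin> (\<lambda>j. (j, False)) ` set_pmf (pmf_of_set A)" by auto
    then show ?thesis using True r by (simp add: pmf_map_outside)
  next
    case False
    hence "rr = (\<lambda>j. (j, False)) (fst rr)" by (cases rr) auto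
    hence "pmf (resp H \<theta> h qa) rr = pmf (pmf_of_set A) (fst rr)" using r pmf_map_inj'[OF inj] by metis
    also have "\<dots> = indicator A (fst rr) / card A" using fA neA by simp
    finally show ?thesis using False cA unfolding A_def by (auto simp: indicator_def)
  qed
qed

lemma resp_H:
  assumes th: "\<theta> \<in> Theta H b"
  shows "pmf (resp H \<theta> H qa) rr = (if rr = (0, fst qa \<in> snd \<theta> H \<and> snd qa = fst \<theta> H) then 1 else 0)"
  using H2 unfolding resp_def Let_def by (simp add: pmf_return)

end


context L begin

definition swapG :: "nat \<Rightarrow> nat \<Rightarrow> nat \<Rightarrow> param \<Rightarrow> param" where
  "swapG l r r' \<theta> = (fst \<theta>, (snd \<theta>)(l := tr r r' ` snd \<theta> l))"

lemma swapG_invol[simp]: "swapG l r r' (swapG l r r' \<theta>) = \<theta>"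
  unfolding swapG_def by (auto simp: image_image)

lemma swapG_Theta:
  assumes th: "\<theta> \<in> Theta H b" and l: "l \<in> {2..H}" and r: "r < N" "r' < N"
  shows "swapG l r r' \<theta> \<in> Theta H b"
proof -
  obtain p G where e: "\<theta> = (p, G)" by fastforce
  have G: "G l \<subseteq> {..<N}" "card (G l) = K" using Theta_memD(4,5)[of p G] th e l by auto
  have "tr r r' ` G l \<subseteq> {..<N}" using G(1) r unfolding tr_def by auto
  moreover have "card (tr r r' ` G l) = K" using G(2) card_image[OF inj_on_subset[OF tr_inj]] by auto
  ultimately show ?thesis using th e l unfolding Theta_def swapG_def by auto
qed

lemma swap_sum_eq:
  assumes l: "l \<in> {2..H}" and r: "r < N" "r' < N"
    and inv: "\<And>\<theta>. \<theta> \<in> Theta H b \<Longrightarrow> F (swapG l r r' \<theta>) = F \<theta>"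
  shows "(\<Sum>\<theta>\<in>Theta H b. F \<theta> * of_bool (P (r \<in> snd \<theta> l))) = (\<Sum>\<theta>\<in>Theta H b. F \<theta> * of_bool (P (r' \<in> snd \<theta> l)))"
proof -
  have "(\<Sum>\<theta>\<in>Theta H b. F \<theta> * of_bool (P (r \<in> snd \<theta> l))) =
        (\<Sum>\<theta>\<in>Theta H b. F (swapG l r r' \<theta>) * of_bool (P (r \<in> snd (swapG l r r' \<theta>) l)))"
    by (rule sum.reindex_bij_witness[of _ "swapG l r r'" "swapG l r r'"])
       (auto intro: swapG_Theta[OF _ l r])
  also have "\<dots> = (\<Sum>\<theta>\<in>Theta H b. F \<theta> * of_bool (P (r' \<in> snd \<theta> l)))"
  proof (rule sum.cong[OF refl])
    fix \<theta> assume th: "\<theta> \<in> Theta H b"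
    have "(r \<in> snd (swapG l r r' \<theta>) l) = (r' \<in> snd \<theta> l)"
      unfolding swapG_def by (simp only: snd_conv fun_upd_same mem_tr_image) (simp add: tr_def)
    thus "F (swapG l r r' \<theta>) * of_bool (P (r \<in> snd (swapG l r r' \<theta>) l)) = F \<theta> * of_bool (P (r' \<in> snd \<theta> l))"
      using inv[OF th] by simp
  qed
  finally show ?thesis .
qed

lemma swap_sum_le:
  fixes F :: "param \<Rightarrow> real"
  assumes l: "l \<in> {2..H}" and U: "U \<subseteq> {..<N}" "r \<in> U" and F0: "\<And>\<theta>. F \<theta> \<ge> 0"
    and inv: "\<And>r' \<theta>. r' \<in> U \<Longrightarrow> \<theta> \<in> Theta H b \<Longrightarrow> F (swapG l r r' \<theta>) = F \<theta>"
  shows "real (card U) * (\<Sum>\<theta>\<in>Theta H b. F \<theta> * of_bool (r \<in> snd \<theta> l)) \<le> real K * (\<Sum>\<theta>\<in>Theta H b. F \<theta>)"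
    and "real (card U) * (\<Sum>\<theta>\<in>Theta H b. F \<theta> * of_bool (r \<notin> snd \<theta> l)) \<le> real (N - K) * (\<Sum>\<theta>\<in>Theta H b. F \<theta>)"
proof -
  have fU: "finite U" using U(1) finite_subset by blast
  have rN: "r < N" using U by auto
  have key: "\<And>P. real (card U) * (\<Sum>\<theta>\<in>Theta H b. F \<theta> * of_bool (P (r \<in> snd \<theta> l)))
      = (\<Sum>\<theta>\<in>Theta H b. F \<theta> * real (card {r'\<in>U. P (r' \<in> snd \<theta> l)}))"
  proof -
    fix P
    have "real (card U) * (\<Sum>\<theta>\<in>Theta H b. F \<theta> * of_bool (P (r \<in> snd \<theta> l)))
        = (\<Sum>r'\<in>U. (\<Sum>\<theta>\<in>Theta H b. F \<theta> * of_bool (P (r \<in> snd \<theta> l))))" by simp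
    also have "\<dots> = (\<Sum>r'\<in>U. (\<Sum>\<theta>\<in>Theta H b. F \<theta> * of_bool (P (r' \<in> snd \<theta> l))))"
      by (rule sum.cong[OF refl], rule swap_sum_eq[OF l rN]) (use U inv in auto)
    also have "\<dots> = (\<Sum>\<theta>\<in>Theta H b. (\<Sum>r'\<in>U. F \<theta> * of_bool (P (r' \<in> snd \<theta> l))))"
      by (rule sum.swap)
    also have "\<dots> = (\<Sum>\<theta>\<in>Theta H b. F \<theta> * real (card {r'\<in>U. P (r' \<in> snd \<theta> l)}))"
    proof (rule sum.cong[OF refl])
      fix \<theta>
      have "(\<Sum>r'\<in>U. F \<theta> * of_bool (P (r' \<in> snd \<theta> l))) = F \<theta> * (\<Sum>r'\<in>U. of_bool (P (r' \<in> snd \<theta> l)))"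
        by (simp only: sum_distrib_left)
      also have "(\<Sum>r'\<in>U. (of_bool (P (r' \<in> snd \<theta> l)) :: real)) = real (card {r'\<in>U. P (r' \<in> snd \<theta> l)})"
      proof -
        have "{r'\<in>U. P (r' \<in> snd \<theta> l)} = U \<inter> {x. P (x \<in> snd \<theta> l)}" by blast
        thus ?thesis using fU sum_of_bool_eq[OF fU, of "\<lambda>x. P (x \<in> snd \<theta> l)"] by simp
      qed
      finally show "(\<Sum>r'\<in>U. F \<theta> * of_bool (P (r' \<in> snd \<theta> l))) = F \<theta> * real (card {r'\<in>U. P (r' \<in> snd \<theta> l)})" .
    qed
    finally show "real (card U) * (\<Sum>\<theta>\<in>Theta H b. F \<theta> * of_bool (P (r \<in> snd \<theta> l)))
      = (\<Sum>\<theta>\<in>Theta H b. F \<theta> * real (card {r'\<in>U. P (r' \<in> snd \<theta> l)}))" .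
  qed
  have c1: "\<And>\<theta>. \<theta> \<in> Theta H b \<Longrightarrow> card {r'\<in>U. r' \<in> snd \<theta> l} \<le> K"
  proof -
    fix \<theta> assume th: "\<theta> \<in> Theta H b"
    have "card {r'\<in>U. r' \<in> snd \<theta> l} \<le> card (snd \<theta> l)"
      by (rule card_mono) (use sub_G[OF th l] finite_subset in auto)
    thus "card {r'\<in>U. r' \<in> snd \<theta> l} \<le> K" using card_G[OF th l] by simp
  qed
  have c2: "\<And>\<theta>. \<theta> \<in> Theta H b \<Longrightarrow> card {r'\<in>U. r' \<notin> snd \<theta> l} \<le> N - K"
  proof -
    fix \<theta> assume th: "\<theta> \<in> Theta H b"
    have "card {r'\<in>U. r' \<notin> snd \<theta> l} \<le> card ({..<N} - snd \<theta> l)"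
      by (rule card_mono) (use U in auto)
    thus "card {r'\<in>U. r' \<notin> snd \<theta> l} \<le> N - K" using card_G[OF th l] sub_G[OF th l]
      by (simp add: card_Diff_subset finite_subset)
  qed
  show "real (card U) * (\<Sum>\<theta>\<in>Theta H b. F \<theta> * of_bool (r \<in> snd \<theta> l)) \<le> real K * (\<Sum>\<theta>\<in>Theta H b. F \<theta>)"
  proof -
    have "(\<Sum>\<theta>\<in>Theta H b. F \<theta> * real (card {r'\<in>U. r' \<in> snd \<theta> l})) \<le> (\<Sum>\<theta>\<in>Theta H b. F \<theta> * real K)"
      by (rule sum_mono, rule mult_left_mono) (use c1 F0 in auto)
    also have "\<dots> = real K * (\<Sum>\<theta>\<in>Theta H b. F \<theta>)" by (simp add: sum_distrib_right mult.commute)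
    finally show ?thesis using key[of "\<lambda>x. x"] by simp
  qed
  show "real (card U) * (\<Sum>\<theta>\<in>Theta H b. F \<theta> * of_bool (r \<notin> snd \<theta> l)) \<le> real (N - K) * (\<Sum>\<theta>\<in>Theta H b. F \<theta>)"
  proof -
    have "(\<Sum>\<theta>\<in>Theta H b. F \<theta> * real (card {r'\<in>U. r' \<notin> snd \<theta> l})) \<le> (\<Sum>\<theta>\<in>Theta H b. F \<theta> * real (N - K))"
      by (rule sum_mono, rule mult_left_mono) (use c2 F0 in auto)
    also have "\<dots> = real (N - K) * (\<Sum>\<theta>\<in>Theta H b. F \<theta>)" by (simp add: sum_distrib_right mult.commute)
    finally show ?thesis using key[of "Not"] by simp
  qed
qed

end


context L begin

definition flip :: "nat \<Rightarrow> param \<Rightarrow> param" where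
  "flip l \<theta> = ((fst \<theta>)(l := \<not> fst \<theta> l), snd \<theta>)"

lemma flip_invol[simp]: "flip l (flip l \<theta>) = \<theta>"
  unfolding flip_def by auto

lemma flip_Theta:
  assumes th: "\<theta> \<in> Theta H b" and l: "1 \<le> l" "l < H"
  shows "flip l \<theta> \<in> Theta H b"
  using th l unfolding Theta_def flip_def by (auto simp: subset_iff)

lemma flip_half:
  fixes F :: "param \<Rightarrow> real"
  assumes l: "1 \<le> l" "l < H" and inv: "\<And>\<theta>. \<theta> \<in> Theta H b \<Longrightarrow> F (flip l \<theta>) = F \<theta>"
  shows "(\<Sum>\<theta>\<in>Theta H b. F \<theta> * of_bool (fst \<theta> l = a)) = (\<Sum>\<theta>\<in>Theta H b. F \<theta>) / 2"
proof -
  have sw: "(\<Sum>\<theta>\<in>Theta H b. F \<theta> * of_bool (fst \<theta> l = c)) = (\<Sum>\<theta>\<in>Theta H b. F \<theta> * of_bool (fst \<theta> l = (\<not> c)))" for c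
  proof -
    have "(\<Sum>\<theta>\<in>Theta H b. F \<theta> * of_bool (fst \<theta> l = c)) = (\<Sum>\<theta>\<in>Theta H b. F (flip l \<theta>) * of_bool (fst (flip l \<theta>) l = c))"
      by (rule sum.reindex_bij_witness[of _ "flip l" "flip l"]) (auto intro: flip_Theta[OF _ l])
    also have "\<dots> = (\<Sum>\<theta>\<in>Theta H b. F \<theta> * of_bool (fst \<theta> l = (\<not> c)))"
    proof (rule sum.cong[OF refl])
      fix \<theta> assume th: "\<theta> \<in> Theta H b"
      have "(fst (flip l \<theta>) l = c) = (fst \<theta> l = (\<not> c))" unfolding flip_def by auto
      thus "F (flip l \<theta>) * of_bool (fst (flip l \<theta>) l = c) = F \<theta> * of_bool (fst \<theta> l = (\<not> c))"
        using inv[OF th] by simp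
    qed
    finally show ?thesis .
  qed
  have "(\<Sum>\<theta>\<in>Theta H b. F \<theta> * of_bool (fst \<theta> l = a)) + (\<Sum>\<theta>\<in>Theta H b. F \<theta> * of_bool (fst \<theta> l = (\<not> a)))
      = (\<Sum>\<theta>\<in>Theta H b. F \<theta>)"
    by (simp only: sum.distrib[symmetric]) (rule sum.cong[OF refl], auto)
  thus ?thesis using sw[of a] by simp
qed

definition chainok :: "(nat \<times> bool) list \<Rightarrow> (nat \<Rightarrow> bool) \<Rightarrow> bool" where
  "chainok cs p = (\<forall>la\<in>set cs. p (fst la) = snd la)"

lemma chain_count:
  fixes F :: "(nat \<Rightarrow> nat set) \<Rightarrow> real"
  assumes "distinct (map fst cs)" "\<forall>la\<in>set cs. 1 \<le> fst la \<and> fst la < H"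
  shows "(\<Sum>\<theta>\<in>Theta H b. of_bool (chainok cs (fst \<theta>)) * F (snd \<theta>)) = (\<Sum>\<theta>\<in>Theta H b. F (snd \<theta>)) / 2 ^ length cs"
  using assms
proof (induction cs)
  case Nil
  then show ?case by (simp add: chainok_def)
next
  case (Cons la cs)
  obtain l a where e: "la = (l, a)" by fastforce
  have l: "1 \<le> l" "l < H" using Cons.prems e by auto
  have nl: "l \<notin> fst ` set cs" using Cons.prems e by auto
  have "(\<Sum>\<theta>\<in>Theta H b. of_bool (chainok (la # cs) (fst \<theta>)) * F (snd \<theta>))
      = (\<Sum>\<theta>\<in>Theta H b. (of_bool (chainok cs (fst \<theta>)) * F (snd \<theta>)) * of_bool (fst \<theta> l = a))"
    by (rule sum.cong[OF refl]) (auto simp: chainok_def e)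
  also have "\<dots> = (\<Sum>\<theta>\<in>Theta H b. of_bool (chainok cs (fst \<theta>)) * F (snd \<theta>)) / 2"
  proof (rule flip_half[OF l])
    fix \<theta> :: param
    have "chainok cs (fst (flip l \<theta>)) = chainok cs (fst \<theta>)"
      using nl unfolding chainok_def flip_def by (auto simp: image_iff)
    thus "of_bool (chainok cs (fst (flip l \<theta>))) * F (snd (flip l \<theta>)) = of_bool (chainok cs (fst \<theta>)) * F (snd \<theta>)"
      by (simp add: flip_def)
  qed
  also have "\<dots> = (\<Sum>\<theta>\<in>Theta H b. F (snd \<theta>)) / 2 ^ length (la # cs)"
    using Cons by simp
  finally show ?case .
qed

end


context L begin

definition Seen :: "nat \<Rightarrow> history \<Rightarrow> nat set" where
  "Seen l hs = {fst (fst (hs!j)) |j. j < length hs \<and> j mod H + 1 = l} \<union> {fst (snd (hs!j)) |j. j < length hs \<and> j mod H + 2 = l}"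

lemma Hpos: "H > 0" using H2 by simp

lemma lay_le: "j mod H + 1 \<le> H" using Hpos by (simp add: Suc_leI)

lemma Pr_local:
  assumes th: "\<theta> \<in> Theta H b" and th': "\<theta>' \<in> Theta H b'" and f: "fst \<theta>' = fst \<theta>"
    and loc: "\<And>l i. l \<in> {2..H} \<Longrightarrow> i \<in> Seen l hs \<Longrightarrow> (i \<in> snd \<theta>' l) = (i \<in> snd \<theta> l)"
  shows "Pr \<theta>' hs = Pr \<theta> hs"
proof -
  have "pmf (resp H \<theta>' (j mod H + 1) (fst (hs!j))) (snd (hs!j)) = pmf (resp H \<theta> (j mod H + 1) (fst (hs!j))) (snd (hs!j))"
    if j: "j < length hs" for j
  proof -
    define h where "h = j mod H + 1"
    have h1: "1 \<le> h" "h \<le> H" unfolding h_def using lay_le by auto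
    have iS: "fst (fst (hs!j)) \<in> Seen h hs" unfolding Seen_def h_def using j by blast
    have rS: "fst (snd (hs!j)) \<in> Seen (Suc h) hs" unfolding Seen_def h_def using j by force
    show ?thesis
    proof (cases "h < H")
      case True
      have "ty \<theta>' h (fst (hs!j)) = ty \<theta> h (fst (hs!j))"
        unfolding ty_def using f loc[OF _ iS] h1 by (cases "h = 1") auto
      moreover have "(fst (snd (hs!j)) \<in> snd \<theta>' (Suc h)) = (fst (snd (hs!j)) \<in> snd \<theta> (Suc h))"
        using loc[OF _ rS] h1 True by auto
      ultimately show ?thesis unfolding h_def[symmetric] using resp_lt[OF th h1(1) True] resp_lt[OF th' h1(1) True] by simp
    next
      case False
      hence hH: "h = H" using h1 by simp
      have "(fst (fst (hs!j)) \<in> snd \<theta>' H) = (fst (fst (hs!j)) \<in> snd \<theta> H)"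
        using loc[OF _ iS] hH H2 by auto
      then show ?thesis unfolding h_def[symmetric] hH using resp_H[OF th] resp_H[OF th'] f by simp
    qed
  qed
  thus ?thesis unfolding Pr_prod by (auto intro!: prod.cong)
qed

lemma Pr_swap:
  assumes th: "\<theta> \<in> Theta H b" and l: "l \<in> {2..H}" and r: "r < N" "r' < N"
    and nr: "r \<notin> Seen l hs" "r' \<notin> Seen l hs"
  shows "Pr (swapG l r r' \<theta>) hs = Pr \<theta> hs"
proof (rule Pr_local[OF th swapG_Theta[OF th l r]])
  show "fst (swapG l r r' \<theta>) = fst \<theta>" by (simp add: swapG_def)
  fix l' i assume "l' \<in> {2..H}" "i \<in> Seen l' hs"
  show "(i \<in> snd (swapG l r r' \<theta>) l') = (i \<in> snd \<theta> l')"
  proof (cases "l' = l")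
    case True
    hence "i \<noteq> r" "i \<noteq> r'" using nr \<open>i \<in> Seen l' hs\<close> by auto
    hence "tr r r' i = i" by (simp add: tr_def)
    then show ?thesis using True unfolding swapG_def by (simp only: snd_conv fun_upd_same mem_tr_image)
  next
    case False
    then show ?thesis unfolding swapG_def by simp
  qed
qed

lemma Collect_Suc: "{f j |j. j < Suc n \<and> P j} = {f j |j. j < n \<and> P j} \<union> (if P n then {f n} else {})"
  by (auto simp: less_Suc_eq)

lemma Collect_app: "{f ((hs @ [x]) ! j) |j. j < length hs \<and> P j} = {f (hs ! j) |j. j < length hs \<and> P j}"
  by (metis (lifting) nth_append_left)

lemma Seen_snoc: "Seen l (hs @ [x]) = Seen l hs \<union> (if length hs mod H + 1 = l then {fst (fst x)} else {})
   \<union> (if length hs mod H + 2 = l then {fst (snd x)} else {})"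
proof -
  have g: "\<And>g P. {g ((hs@[x])!j) |j. j < length (hs @ [x]) \<and> P j} = {g (hs!j) |j. j < length hs \<and> P j} \<union> (if P (length hs) then {g x} else {})"
    by (simp only: length_append_singleton Collect_Suc Collect_app nth_append_length)
  show ?thesis unfolding Seen_def
    using g[of "\<lambda>y. fst (fst y)" "\<lambda>j. j mod H + 1 = l"] g[of "\<lambda>y. fst (snd y)" "\<lambda>j. j mod H + 2 = l"]
    by (simp only:) auto
qed

lemma card_res: "card {j. j < H * T \<and> j mod H = c} \<le> T"
proof -
  have "{j. j < H * T \<and> j mod H = c} \<subseteq> (\<lambda>t. t * H + c) ` {..<T}"
  proof
    fix j assume j: "j \<in> {j. j < H * T \<and> j mod H = c}"
    have "j div H < T" using j by (simp add: div_less_iff_less_mult mult.commute Hpos)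
    moreover have "j = j div H * H + c" using j div_mult_mod_eq[of j H] by simp
    ultimately show "j \<in> (\<lambda>t. t * H + c) ` {..<T}" by blast
  qed
  hence "card {j. j < H * T \<and> j mod H = c} \<le> card ((\<lambda>t. t * H + c) ` {..<T})" by (rule card_mono[rotated]) simp
  also have "\<dots> \<le> T" using card_image_le[of "{..<T}"] by simp
  finally show ?thesis .
qed

lemma card_Seen: assumes "length hs \<le> H * T" shows "card (Seen l hs) \<le> 2 * T" "finite (Seen l hs)"
proof -
  have s: "Seen l hs \<subseteq> (\<lambda>j. fst (fst (hs!j))) ` {j. j < H * T \<and> j mod H = l - 1} \<union> (\<lambda>j. fst (snd (hs!j))) ` {j. j < H * T \<and> j mod H = l - 2}"
    unfolding Seen_def using assms by force
  have f: "finite ((\<lambda>j. fst (fst (hs!j))) ` {j. j < H * T \<and> j mod H = l - 1} \<union> (\<lambda>j. fst (snd (hs!j))) ` {j. j < H * T \<and> j mod H = l - 2})"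
    by simp
  show "finite (Seen l hs)" using finite_subset[OF s f] .
  have "card (Seen l hs) \<le> card ((\<lambda>j. fst (fst (hs!j))) ` {j. j < H * T \<and> j mod H = l - 1} \<union> (\<lambda>j. fst (snd (hs!j))) ` {j. j < H * T \<and> j mod H = l - 2})"
    by (rule card_mono[OF f s])
  also have "\<dots> \<le> card ((\<lambda>j. fst (fst (hs!j))) ` {j. j < H * T \<and> j mod H = l - 1}) + card ((\<lambda>j. fst (snd (hs!j))) ` {j. j < H * T \<and> j mod H = l - 2})"
    by (rule card_Un_le)
  also have "\<dots> \<le> card {j. j < H * T \<and> j mod H = l - 1} + card {j. j < H * T \<and> j mod H = l - 2}"
    by (intro add_mono card_image_le) auto
  also have "\<dots> \<le> 2 * T" using card_res[of "l - 1"] card_res[of "l - 2"] by simp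
  finally show "card (Seen l hs) \<le> 2 * T" .
qed

end


context L begin

definition Resp :: "nat \<Rightarrow> response set" where
  "Resp l = (if l < H then (\<lambda>j. (j, False)) ` {..<N} else {(0, False)})"

definition nocoll :: "history \<Rightarrow> bool" where
  "nocoll hs = (\<forall>j<length hs. j mod H + 1 < H \<longrightarrow> fst (snd (hs!j)) \<notin> Seen (j mod H + 2) (take j hs))"

definition RC :: "nat \<Rightarrow> nat \<Rightarrow> param \<Rightarrow> bool" where
  "RC h0 x0 \<theta> = (h0 = 1 \<or> x0 \<in> snd \<theta> h0)"

definition dd :: real where "dd = real N - 2 * real T - 1"

definition V :: "nat \<Rightarrow> real" where
  "V k = (\<Prod>j<k. if j mod H + 1 < H then 1 / dd else 1)"

lemma nocoll_snoc: "nocoll (hs @ [x]) \<longleftrightarrow> nocoll hs \<and> (length hs mod H + 1 < H \<longrightarrow> fst (snd x) \<notin> Seen (length hs mod H + 2) hs)"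
  unfolding nocoll_def by (auto simp: nth_append less_Suc_eq)

lemma KltN: "K < N"
proof -
  have "(1::nat) \<le> 2^H" by simp
  thus ?thesis using KN by linarith
qed

lemma div_swap: "(c::real) * A \<le> k * B \<Longrightarrow> k > 0 \<Longrightarrow> c > 0 \<Longrightarrow> A / k \<le> B / c"
  by (simp add: divide_le_eq le_divide_eq mult.commute pos_divide_le_eq pos_le_divide_eq)

lemma Pr_Nil: "Pr \<theta> [] = 1" unfolding Pr_def by simp

lemma resp_split:
  assumes th: "\<theta> \<in> Theta H b" and h: "1 \<le> h" "h < H" and r: "r < N"
  shows "pmf (resp H \<theta> h qa) (r, False) =
     of_bool (ty \<theta> h qa) * of_bool (r \<in> snd \<theta> (Suc h)) / real K
   + of_bool (\<not> ty \<theta> h qa) * of_bool (r \<notin> snd \<theta> (Suc h)) / real (N - K)"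
  unfolding resp_lt[OF th h] using r by auto

lemma lemB:
  fixes w :: "(nat \<Rightarrow> bool) \<Rightarrow> real"
  assumes w0: "\<And>p. w p \<ge> 0" and h0: "h0 = 1 \<or> (2 \<le> h0 \<and> h0 \<le> H)" and dpos: "dd > 0"
  shows "cons hs \<Longrightarrow> (\<forall>j<length hs. snd (hs!j) \<in> Resp (j mod H + 1)) \<Longrightarrow> nocoll hs \<Longrightarrow>
    (\<forall>j<length hs. j mod H + 2 = h0 \<longrightarrow> fst (snd (hs!j)) \<noteq> x0) \<Longrightarrow> length hs \<le> H * T \<Longrightarrow>
    (\<Sum>\<theta>\<in>Theta H b. Pr \<theta> hs * (w (fst \<theta>) * of_bool (RC h0 x0 \<theta>)))
      \<le> V (length hs) * (\<Sum>\<theta>\<in>Theta H b. w (fst \<theta>) * of_bool (RC h0 x0 \<theta>))"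
proof (induction hs rule: rev_induct)
  case Nil
  then show ?case by (simp add: Pr_Nil V_def)
next
  case (snoc x hs)
  define k where "k = length hs"
  define h where "h = k mod H + 1"
  define W where "W = (\<lambda>\<theta>. w (fst \<theta>) * of_bool (RC h0 x0 \<theta>))"
  have W0: "W \<theta> \<ge> 0" for \<theta> unfolding W_def using w0 by simp
  have c: "cons hs" "fst x = q hs" using snoc.prems(1) cons_snoc by auto
  have R: "\<forall>j<length hs. snd (hs!j) \<in> Resp (j mod H + 1)"
  proof (intro allI impI)
    fix j assume j: "j < length hs"
    hence "snd ((hs @ [x])!j) \<in> Resp (j mod H + 1)" using snoc.prems(2) by simp
    thus "snd (hs!j) \<in> Resp (j mod H + 1)" using j by (simp add: nth_append)
  qed
  have Rx: "snd x \<in> Resp h"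
  proof -
    have "k < length (hs @ [x])" unfolding k_def by simp
    hence "snd ((hs @ [x]) ! k) \<in> Resp (k mod H + 1)" using snoc.prems(2) by blast
    thus ?thesis unfolding h_def k_def by simp
  qed
  have nc: "nocoll hs" and ncx: "h < H \<Longrightarrow> fst (snd x) \<notin> Seen (Suc h) hs"
    using snoc.prems(3) nocoll_snoc unfolding h_def k_def by auto
  have av: "\<forall>j<length hs. j mod H + 2 = h0 \<longrightarrow> fst (snd (hs!j)) \<noteq> x0"
  proof (intro allI impI)
    fix j assume j: "j < length hs" "j mod H + 2 = h0"
    hence "fst (snd ((hs @ [x])!j)) \<noteq> x0" using snoc.prems(4) by simp
    thus "fst (snd (hs!j)) \<noteq> x0" using j by (simp add: nth_append)
  qed
  have avx: "Suc h = h0 \<Longrightarrow> fst (snd x) \<noteq> x0"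
  proof -
    assume a: "Suc h = h0"
    have "k < length (hs @ [x])" "k mod H + 2 = h0" using a unfolding h_def k_def by auto
    hence "fst (snd ((hs @ [x]) ! k)) \<noteq> x0" using snoc.prems(4) by blast
    thus ?thesis unfolding k_def by simp
  qed
  have kl: "k < H * T" using snoc.prems(5) unfolding k_def by simp
  have IH: "(\<Sum>\<theta>\<in>Theta H b. Pr \<theta> hs * W \<theta>) \<le> V k * (\<Sum>\<theta>\<in>Theta H b. W \<theta>)"
    using snoc.IH[OF c(1) R nc av] kl unfolding W_def k_def by simp
  have Prs: "Pr \<theta> (hs @ [x]) = Pr \<theta> hs * pmf (resp H \<theta> h (q hs)) (snd x)" for \<theta>
    using Pr_snoc[of \<theta> hs x] c(2) unfolding h_def k_def by simp
  have Vs: "V (Suc k) = V k * (if h < H then 1 / dd else 1)" unfolding V_def h_def by simp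
  show ?case
  proof (cases "h < H")
    case False
    have "(\<Sum>\<theta>\<in>Theta H b. Pr \<theta> (hs @ [x]) * W \<theta>) \<le> (\<Sum>\<theta>\<in>Theta H b. Pr \<theta> hs * W \<theta>)"
      unfolding Prs by (rule sum_mono) (simp add: W0 Pr_nonneg mult_left_le mult_right_mono pmf_le_1)
    also have "\<dots> \<le> V (Suc k) * (\<Sum>\<theta>\<in>Theta H b. W \<theta>)" using IH Vs False by simp
    finally show ?thesis unfolding W_def k_def by simp
  next
    case True
    define l where "l = Suc h"
    have h1: "1 \<le> h" unfolding h_def by simp
    have l: "l \<in> {2..H}" unfolding l_def using True h1 by auto
    obtain r where rx: "snd x = (r, False)" and rN: "r < N" using Rx True unfolding Resp_def by auto
    define U where "U = {..<N} - Seen l hs - (if l = h0 then {x0} else {})"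
    have rU: "r \<in> U" unfolding U_def using rN ncx[OF True] avx rx unfolding l_def by auto
    have UN: "U \<subseteq> {..<N}" unfolding U_def by auto
    define F1 where "F1 = (\<lambda>\<theta>. Pr \<theta> hs * W \<theta> * of_bool (ty \<theta> h (q hs)))"
    define F2 where "F2 = (\<lambda>\<theta>. Pr \<theta> hs * W \<theta> * of_bool (\<not> ty \<theta> h (q hs)))"
    have inv: "F (swapG l r r' \<theta>) = F \<theta>" if F: "F = F1 \<or> F = F2" and r': "r' \<in> U" and th: "\<theta> \<in> Theta H b" for F r' \<theta>
    proof -
      have r'N: "r' < N" and r'S: "r' \<notin> Seen l hs" using r' unfolding U_def by auto
      have rS: "r \<notin> Seen l hs" using rU unfolding U_def by auto
      have P: "Pr (swapG l r r' \<theta>) hs = Pr \<theta> hs" by (rule Pr_swap[OF th l rN r'N rS r'S])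
      have "RC h0 x0 (swapG l r r' \<theta>) = RC h0 x0 \<theta>"
      proof (cases "h0 = l")
        case True
        hence "x0 \<noteq> r" "x0 \<noteq> r'" using rU r' unfolding U_def by auto
        hence "tr r r' x0 = x0" by (simp add: tr_def)
        then show ?thesis unfolding RC_def swapG_def using True by (simp only: snd_conv fun_upd_same mem_tr_image)
      next
        case False
        then show ?thesis unfolding RC_def swapG_def by simp
      qed
      moreover have "ty (swapG l r r' \<theta>) h (q hs) = ty \<theta> h (q hs)"
        unfolding ty_def swapG_def l_def by simp
      moreover have "fst (swapG l r r' \<theta>) = fst \<theta>" by (simp add: swapG_def)
      ultimately show ?thesis using F P unfolding F1_def F2_def W_def by auto
    qed
    have F10: "F1 \<theta> \<ge> 0" "F2 \<theta> \<ge> 0" for \<theta> unfolding F1_def F2_def using W0 Pr_nonneg by auto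
    have s1: "real (card U) * (\<Sum>\<theta>\<in>Theta H b. F1 \<theta> * of_bool (r \<in> snd \<theta> l)) \<le> real K * (\<Sum>\<theta>\<in>Theta H b. F1 \<theta>)"
      by (rule swap_sum_le(1)[OF l UN rU F10(1)]) (rule inv, auto)
    have s2: "real (card U) * (\<Sum>\<theta>\<in>Theta H b. F2 \<theta> * of_bool (r \<notin> snd \<theta> l)) \<le> real (N - K) * (\<Sum>\<theta>\<in>Theta H b. F2 \<theta>)"
      by (rule swap_sum_le(2)[OF l UN rU F10(2)]) (rule inv, auto)
    have Kp: "real K > 0" by simp
    have NKp: "real (N - K) > 0" using KltN by simp
    have cU: "real (card U) \<ge> dd"
    proof -
      have fS: "finite (Seen l hs)" and cS: "card (Seen l hs) \<le> 2 * T" using card_Seen[of hs l] kl unfolding k_def by auto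
      have "card ({..<N} - Seen l hs) \<ge> N - 2 * T"
        using diff_card_le_card_Diff[OF fS, of "{..<N}"] cS by simp
      moreover have "card ({..<N} - Seen l hs) \<le> card U + 1"
      proof -
        have "{..<N} - Seen l hs \<subseteq> insert x0 U" unfolding U_def by auto
        hence "card ({..<N} - Seen l hs) \<le> card (insert x0 U)" by (intro card_mono) (auto simp: U_def)
        also have "\<dots> \<le> card U + 1" by (simp add: card_insert_le_m1 card_insert_if)
        finally show ?thesis .
      qed
      ultimately have "N \<le> card U + 1 + 2 * T" by linarith
      hence "real N \<le> real (card U + 1 + 2 * T)" by (rule of_nat_mono)
      hence "real N \<le> real (card U) + 1 + 2 * real T" by simp
      thus ?thesis unfolding dd_def by simp
    qed
    have cUp: "real (card U) > 0" using cU dpos by simp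
    have "(\<Sum>\<theta>\<in>Theta H b. Pr \<theta> (hs @ [x]) * W \<theta>)
        = (\<Sum>\<theta>\<in>Theta H b. F1 \<theta> * of_bool (r \<in> snd \<theta> l)) / real K + (\<Sum>\<theta>\<in>Theta H b. F2 \<theta> * of_bool (r \<notin> snd \<theta> l)) / real (N - K)"
    proof -
      have "(\<Sum>\<theta>\<in>Theta H b. Pr \<theta> (hs @ [x]) * W \<theta>) = (\<Sum>\<theta>\<in>Theta H b. F1 \<theta> * of_bool (r \<in> snd \<theta> l) / real K + F2 \<theta> * of_bool (r \<notin> snd \<theta> l) / real (N - K))"
      proof (rule sum.cong[OF refl])
        fix \<theta> assume th: "\<theta> \<in> Theta H b"
        show "Pr \<theta> (hs @ [x]) * W \<theta> = F1 \<theta> * of_bool (r \<in> snd \<theta> l) / real K + F2 \<theta> * of_bool (r \<notin> snd \<theta> l) / real (N - K)"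
          unfolding Prs rx resp_split[OF th h1 True rN] F1_def F2_def l_def by (simp add: algebra_simps)
      qed
      thus ?thesis by (simp only: sum.distrib sum_divide_distrib)
    qed
    also have "\<dots> \<le> (\<Sum>\<theta>\<in>Theta H b. F1 \<theta>) / real (card U) + (\<Sum>\<theta>\<in>Theta H b. F2 \<theta>) / real (card U)"
    proof (rule add_mono)
      show "(\<Sum>\<theta>\<in>Theta H b. F1 \<theta> * of_bool (r \<in> snd \<theta> l)) / real K \<le> (\<Sum>\<theta>\<in>Theta H b. F1 \<theta>) / real (card U)"
        using s1 Kp cUp by (rule div_swap)
      show "(\<Sum>\<theta>\<in>Theta H b. F2 \<theta> * of_bool (r \<notin> snd \<theta> l)) / real (N - K) \<le> (\<Sum>\<theta>\<in>Theta H b. F2 \<theta>) / real (card U)"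
        using s2 NKp cUp by (rule div_swap)
    qed
    also have "\<dots> = (\<Sum>\<theta>\<in>Theta H b. Pr \<theta> hs * W \<theta>) / real (card U)"
      unfolding add_divide_distrib[symmetric] sum.distrib[symmetric] F1_def F2_def
      by (rule arg_cong[where f="\<lambda>x. x / real (card U)"], rule sum.cong[OF refl]) (simp add: algebra_simps)
    also have "\<dots> \<le> (V k * (\<Sum>\<theta>\<in>Theta H b. W \<theta>)) / dd"
    proof (rule frac_le)
      have "0 \<le> (\<Sum>\<theta>\<in>Theta H b. Pr \<theta> hs * W \<theta>)" by (rule sum_nonneg) (simp add: Pr_nonneg W0)
      thus "0 \<le> V k * (\<Sum>\<theta>\<in>Theta H b. W \<theta>)" using IH by linarith
    qed (use IH cU dpos in auto)
    also have "\<dots> = V (Suc k) * (\<Sum>\<theta>\<in>Theta H b. W \<theta>)" using Vs True by simp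
    finally show ?thesis unfolding W_def k_def by simp
  qed
qed

end


context L begin

definition src :: "history \<Rightarrow> nat \<Rightarrow> nat \<Rightarrow> nat option" where
  "src hs l x = (if \<exists>j<length hs. j mod H + 2 = l \<and> fst (snd (hs!j)) = x
     then Some (SOME j. j<length hs \<and> j mod H + 2 = l \<and> fst (snd (hs!j)) = x) else None)"

primrec chain :: "history \<Rightarrow> nat \<Rightarrow> nat \<Rightarrow> (nat \<times> bool) list \<times> nat \<times> nat" where
  "chain hs 0 x = ([], 0, x)"
| "chain hs (Suc m) x = (if m = 0 then ([], 1, x) else
     (case src hs (Suc m) x of None \<Rightarrow> ([], Suc m, x)
      | Some j \<Rightarrow> ((m, snd (fst (hs!j))) # fst (chain hs m (fst (fst (hs!j)))), snd (chain hs m (fst (fst (hs!j)))))))"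

lemma src_Some: "src hs l x = Some j \<Longrightarrow> j<length hs \<and> j mod H + 2 = l \<and> fst (snd (hs!j)) = x"
proof -
  assume a: "src hs l x = Some j"
  hence ex: "\<exists>j. j<length hs \<and> j mod H + 2 = l \<and> fst (snd (hs!j)) = x" and
    e: "j = (SOME j. j<length hs \<and> j mod H + 2 = l \<and> fst (snd (hs!j)) = x)"
    unfolding src_def by (auto split: if_splits)
  show ?thesis unfolding e by (rule someI_ex[OF ex])
qed

lemma src_None: "src hs l x = None \<Longrightarrow> \<not> (\<exists>j<length hs. j mod H + 2 = l \<and> fst (snd (hs!j)) = x)"
  unfolding src_def by (auto split: if_splits)

lemma chain_struct:
  "1 \<le> h \<Longrightarrow> 1 \<le> fst (snd (chain hs h x)) \<and> fst (snd (chain hs h x)) \<le> h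
    \<and> (\<forall>la\<in>set (fst (chain hs h x)). fst (snd (chain hs h x)) \<le> fst la \<and> fst la < h)
    \<and> distinct (map fst (fst (chain hs h x)))
    \<and> length (fst (chain hs h x)) = h - fst (snd (chain hs h x))
    \<and> (fst (snd (chain hs h x)) = 1 \<or> (2 \<le> fst (snd (chain hs h x)) \<and>
         \<not> (\<exists>j<length hs. j mod H + 2 = fst (snd (chain hs h x)) \<and> fst (snd (hs!j)) = snd (snd (chain hs h x)))))"
proof (induction h arbitrary: x)
  case 0
  then show ?case by simp
next
  case (Suc m)
  show ?case
  proof (cases "m = 0")
    case True
    then show ?thesis by simp
  next
    case False
    show ?thesis
    proof (cases "src hs (Suc m) x")
      case None
      then show ?thesis using False src_None[OF None] by simp
    next
      case (Some j)
      define x' where "x' = fst (fst (hs!j))"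
      have IH: "1 \<le> fst (snd (chain hs m x')) \<and> fst (snd (chain hs m x')) \<le> m
        \<and> (\<forall>la\<in>set (fst (chain hs m x')). fst (snd (chain hs m x')) \<le> fst la \<and> fst la < m)
        \<and> distinct (map fst (fst (chain hs m x')))
        \<and> length (fst (chain hs m x')) = m - fst (snd (chain hs m x'))
        \<and> (fst (snd (chain hs m x')) = 1 \<or> (2 \<le> fst (snd (chain hs m x')) \<and>
         \<not> (\<exists>j<length hs. j mod H + 2 = fst (snd (chain hs m x')) \<and> fst (snd (hs!j)) = snd (snd (chain hs m x')))))"
        using Suc.IH[of x'] False by simp
      have e: "chain hs (Suc m) x = ((m, snd (fst (hs!j))) # fst (chain hs m x'), snd (chain hs m x'))"
        using False Some unfolding x'_def by simp
      show ?thesis unfolding e using IH by (auto simp: Suc_diff_le)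
    qed
  qed
qed

lemma lemA:
  assumes th: "\<theta> \<in> Theta H b" and sp: "hs \<in> set_pmf (run H q \<theta> (length hs))"
  shows "1 \<le> h \<Longrightarrow> h \<le> H \<Longrightarrow> (h = 1 \<or> x \<in> snd \<theta> h) \<Longrightarrow>
    chainok (fst (chain hs h x)) (fst \<theta>) \<and> RC (fst (snd (chain hs h x))) (snd (snd (chain hs h x))) \<theta>"
proof (induction h arbitrary: x)
  case 0
  then show ?case by simp
next
  case (Suc m)
  show ?case
  proof (cases "m = 0")
    case True
    then show ?thesis by (simp add: chainok_def RC_def)
  next
    case False
    hence xG: "x \<in> snd \<theta> (Suc m)" using Suc.prems by simp
    show ?thesis
    proof (cases "src hs (Suc m) x")
      case None
      then show ?thesis using False xG by (simp add: chainok_def RC_def)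
    next
      case (Some j)
      define x' where "x' = fst (fst (hs!j))"
      have sj: "j<length hs" "j mod H + 2 = Suc m" "fst (snd (hs!j)) = x" using src_Some[OF Some] by auto
      have jm: "j mod H + 1 = m" using sj by simp
      have m1: "1 \<le> m" "m < H" using False Suc.prems by auto
      have "snd (hs!j) \<in> set_pmf (resp H \<theta> (j mod H + 1) (fst (hs!j)))"
        using sp sj(1) unfolding run_support by blast
      hence "pmf (resp H \<theta> m (fst (hs!j))) (snd (hs!j)) \<noteq> 0" using jm by (simp add: set_pmf_iff)
      hence "(x \<in> snd \<theta> (Suc m)) = ty \<theta> m (fst (hs!j))"
        unfolding resp_lt[OF th m1] using sj(3) by (auto split: if_splits)
      hence tyt: "(m = 1 \<or> x' \<in> snd \<theta> m) \<and> snd (fst (hs!j)) = fst \<theta> m"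
        using xG unfolding ty_def x'_def by simp
      have IH: "chainok (fst (chain hs m x')) (fst \<theta>) \<and> RC (fst (snd (chain hs m x'))) (snd (snd (chain hs m x'))) \<theta>"
        using Suc.IH[of x'] m1 tyt by simp
      have e: "chain hs (Suc m) x = ((m, snd (fst (hs!j))) # fst (chain hs m x'), snd (chain hs m x'))"
        using False Some unfolding x'_def by simp
      show ?thesis unfolding e using IH tyt by (simp add: chainok_def)
    qed
  qed
qed

end


context L begin

lemma NKK: "N = K * K" unfolding nobs_def by (simp add: power_add[symmetric] mult_2)

lemma V_nonneg: "dd > 0 \<Longrightarrow> V k \<ge> 0" unfolding V_def by (auto intro: prod_nonneg)

lemma RC_count:
  assumes h0: "h0 = 1 \<or> (2 \<le> h0 \<and> h0 \<le> H)"
  shows "(\<Sum>\<theta>\<in>Theta H b. of_bool (RC h0 x0 \<theta>) :: real) \<le> real (card (Theta H b)) * (if h0 = 1 then 1 else 1 / 2^H)"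
proof (cases "h0 = 1")
  case True
  then show ?thesis by (simp add: RC_def)
next
  case False
  hence l: "h0 \<in> {2..H}" using h0 by auto
  show ?thesis
  proof (cases "x0 < N")
    case True
    have "real (card {..<N}) * (\<Sum>\<theta>\<in>Theta H b. (\<lambda>_. 1::real) \<theta> * of_bool (x0 \<in> snd \<theta> h0)) \<le> real K * (\<Sum>\<theta>\<in>Theta H b. (\<lambda>_. 1::real) \<theta>)"
      by (rule swap_sum_le(1)[OF l]) (use True in auto)
    hence "real N * (\<Sum>\<theta>\<in>Theta H b. of_bool (RC h0 x0 \<theta>) :: real) \<le> real K * real (card (Theta H b))"
      using False unfolding RC_def by simp
    hence "(\<Sum>\<theta>\<in>Theta H b. of_bool (RC h0 x0 \<theta>) :: real) \<le> real K * real (card (Theta H b)) / real N"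
      using KltN by (simp add: le_divide_eq mult.commute)
    also have "\<dots> = real (card (Theta H b)) * (1 / 2^H)" unfolding NKK by simp
    finally show ?thesis using False by simp
  next
    case False
    have "(\<Sum>\<theta>\<in>Theta H b. of_bool (RC h0 x0 \<theta>) :: real) = 0"
      by (rule sum.neutral) (use sub_G[OF _ l] False \<open>h0 \<noteq> 1\<close> in \<open>auto simp: RC_def\<close>)
    then show ?thesis by simp
  qed
qed

lemma perhs:
  assumes hs: "cons hs" "\<forall>j<length hs. snd (hs!j) \<in> Resp (j mod H + 1)" "nocoll hs" "length hs \<le> H * T"
    and dpos: "dd > 0"
  shows "(\<Sum>\<theta>\<in>Theta H b. Pr \<theta> hs * of_bool (fst (q hs) \<in> snd \<theta> H)) \<le> V (length hs) * real (card (Theta H b)) * (2 / 2^H)"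
proof -
  define x where "x = fst (q hs)"
  obtain cs h0 x0 where ch: "chain hs H x = (cs, h0, x0)" by (metis prod_cases3)
  have st: "1 \<le> h0" "h0 \<le> H" "\<forall>la\<in>set cs. h0 \<le> fst la \<and> fst la < H" "distinct (map fst cs)" "length cs = H - h0"
    "h0 = 1 \<or> (2 \<le> h0 \<and> \<not> (\<exists>j<length hs. j mod H + 2 = h0 \<and> fst (snd (hs!j)) = x0))"
    using chain_struct[of H hs x] H2 ch by auto
  have h0': "h0 = 1 \<or> (2 \<le> h0 \<and> h0 \<le> H)" using st by auto
  have "(\<Sum>\<theta>\<in>Theta H b. Pr \<theta> hs * of_bool (x \<in> snd \<theta> H)) \<le> (\<Sum>\<theta>\<in>Theta H b. Pr \<theta> hs * (of_bool (chainok cs (fst \<theta>)) * of_bool (RC h0 x0 \<theta>)))"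
  proof (rule sum_mono)
    fix \<theta> assume th: "\<theta> \<in> Theta H b"
    show "Pr \<theta> hs * of_bool (x \<in> snd \<theta> H) \<le> Pr \<theta> hs * (of_bool (chainok cs (fst \<theta>)) * of_bool (RC h0 x0 \<theta>))"
    proof (cases "Pr \<theta> hs = 0 \<or> x \<notin> snd \<theta> H")
      case True
      then show ?thesis using Pr_nonneg[of \<theta> hs] by auto
    next
      case False
      hence sp: "hs \<in> set_pmf (run H q \<theta> (length hs))" unfolding Pr_def by (simp add: set_pmf_iff)
      have "chainok cs (fst \<theta>) \<and> RC h0 x0 \<theta>" using lemA[OF th sp, of H x] H2 False ch by simp
      then show ?thesis by (simp add: Pr_nonneg)
    qed
  qed
  also have "\<dots> \<le> V (length hs) * (\<Sum>\<theta>\<in>Theta H b. of_bool (chainok cs (fst \<theta>)) * of_bool (RC h0 x0 \<theta>))"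
    by (rule lemB[OF _ h0' dpos hs(1,2,3) _ hs(4)]) (use st in auto)
  also have "(\<Sum>\<theta>\<in>Theta H b. of_bool (chainok cs (fst \<theta>)) * of_bool (RC h0 x0 \<theta>))
      = (\<Sum>\<theta>\<in>Theta H b. of_bool (chainok cs (fst \<theta>)) * (\<lambda>G. of_bool (h0 = 1 \<or> x0 \<in> G h0) :: real) (snd \<theta>))"
    unfolding RC_def by simp
  also have "\<dots> = (\<Sum>\<theta>\<in>Theta H b. (\<lambda>G. of_bool (h0 = 1 \<or> x0 \<in> G h0) :: real) (snd \<theta>)) / 2 ^ length cs"
    by (rule chain_count) (use st in auto)
  also have "\<dots> = (\<Sum>\<theta>\<in>Theta H b. of_bool (RC h0 x0 \<theta>) :: real) / 2 ^ (H - h0)"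
    unfolding RC_def st(5) by simp
  finally have A: "(\<Sum>\<theta>\<in>Theta H b. Pr \<theta> hs * of_bool (x \<in> snd \<theta> H)) \<le> V (length hs) * ((\<Sum>\<theta>\<in>Theta H b. of_bool (RC h0 x0 \<theta>)) / 2 ^ (H - h0))" .
  have B: "(\<Sum>\<theta>\<in>Theta H b. of_bool (RC h0 x0 \<theta>) :: real) / 2 ^ (H - h0) \<le> real (card (Theta H b)) * (2 / 2^H)"
  proof (cases "h0 = 1")
    case True
    have "(\<Sum>\<theta>\<in>Theta H b. of_bool (RC h0 x0 \<theta>) :: real) / 2 ^ (H - h0) \<le> real (card (Theta H b)) / 2 ^ (H - 1)"
      using RC_count[OF h0'] True by (simp add: divide_right_mono)
    also have "\<dots> = real (card (Theta H b)) * (2 / 2^H)"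
      using H2 by (simp add: power_diff)
    finally show ?thesis .
  next
    case False
    have "(\<Sum>\<theta>\<in>Theta H b. of_bool (RC h0 x0 \<theta>) :: real) / 2 ^ (H - h0) \<le> (\<Sum>\<theta>\<in>Theta H b. of_bool (RC h0 x0 \<theta>) :: real)"
    proof -
      have S0: "(\<Sum>\<theta>\<in>Theta H b. of_bool (RC h0 x0 \<theta>) :: real) \<ge> 0" by (auto intro: sum_nonneg)
      have c1: "(1::real) \<le> 2 ^ (H - h0)" by simp
      have "(\<Sum>\<theta>\<in>Theta H b. of_bool (RC h0 x0 \<theta>) :: real) * 1 \<le> (\<Sum>\<theta>\<in>Theta H b. of_bool (RC h0 x0 \<theta>)) * 2 ^ (H - h0)"
        by (rule mult_left_mono[OF c1 S0])
      thus ?thesis by (simp add: divide_le_eq)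
    qed
    also have "\<dots> \<le> real (card (Theta H b)) * (1 / 2^H)" using RC_count[OF h0'] False by simp
    also have "\<dots> \<le> real (card (Theta H b)) * (2 / 2^H)" by (rule mult_left_mono) (auto simp: divide_right_mono)
    finally show ?thesis .
  qed
  have "V (length hs) * ((\<Sum>\<theta>\<in>Theta H b. of_bool (RC h0 x0 \<theta>) :: real) / 2 ^ (H - h0)) \<le> V (length hs) * (real (card (Theta H b)) * (2 / 2^H))"
    by (rule mult_left_mono[OF B V_nonneg[OF dpos]])
  thus ?thesis using A unfolding x_def by simp
qed

end


context L begin

lemma resp_lt_eq:
  assumes th: "\<theta> \<in> Theta H b" and h: "1 \<le> h" "h < H"
  shows "resp H \<theta> h qa = map_pmf (\<lambda>j. (j, False)) (pmf_of_set {j. j < N \<and> (j \<in> snd \<theta> (Suc h)) = ty \<theta> h qa})"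
  unfolding resp_def ty_def Let_def using h by (simp cong: conj_cong)

lemma card_A_ge:
  assumes th: "\<theta> \<in> Theta H b" and h: "1 \<le> h" "h < H"
  shows "card {j. j < N \<and> (j \<in> snd \<theta> (Suc h)) = c} \<ge> K"
  using card_A[OF th, of "Suc h" c] h KN by auto

lemma resp_coll:
  assumes th: "\<theta> \<in> Theta H b" and h: "1 \<le> h" "h < H" and fS: "finite S"
  shows "emeasure (measure_pmf (resp H \<theta> h qa)) {r. fst r \<in> S} \<le> ennreal (real (card S) / real K)"
proof -
  define A where "A = {j. j < N \<and> (j \<in> snd \<theta> (Suc h)) = ty \<theta> h qa}"
  have cA: "card A \<ge> K" unfolding A_def by (rule card_A_ge[OF th h])
  have fA: "finite A" unfolding A_def by simp
  have neA: "A \<noteq> {}" using cA Kpos by auto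
  have "emeasure (measure_pmf (resp H \<theta> h qa)) {r. fst r \<in> S} = emeasure (measure_pmf (pmf_of_set A)) S"
    unfolding resp_lt_eq[OF th h] A_def[symmetric] by (simp add: vimage_def)
  also have "\<dots> = ennreal (real (card (A \<inter> S)) / real (card A))"
    using emeasure_pmf_of_set[OF neA fA, of S] by (simp add: ennreal_of_nat_eq_real_of_nat divide_ennreal)
  also have "\<dots> \<le> ennreal (real (card S) / real K)"
  proof (rule ennreal_leI)
    have "real (card (A \<inter> S)) \<le> real (card S)" using fS by (simp add: card_mono)
    moreover have "real K \<le> real (card A)" using cA by simp
    ultimately show "real (card (A \<inter> S)) / real (card A) \<le> real (card S) / real K"
      by (intro frac_le) auto
  qed
  finally show ?thesis .
qed

lemma coll_bound_e:
  assumes th: "\<theta> \<in> Theta H b"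
  shows "n \<le> H * T \<Longrightarrow> emeasure (measure_pmf (run H q \<theta> n)) {hs. \<not> nocoll hs} \<le> ennreal (real n * (2 * real T / real K))"
proof (induction n)
  case 0
  have "{hs. \<not> nocoll hs} \<inter> set_pmf (run H q \<theta> 0) = {}" by (simp add: nocoll_def)
  hence "emeasure (measure_pmf (run H q \<theta> 0)) {hs. \<not> nocoll hs} = 0"
    by (metis emeasure_Int_set_pmf emeasure_empty)
  then show ?case by simp
next
  case (Suc n)
  define c where "c = 2 * real T / real K"
  have c0: "c \<ge> 0" unfolding c_def by simp
  define E where "E = {hs. \<not> nocoll hs}"
  have IH: "emeasure (measure_pmf (run H q \<theta> n)) E \<le> ennreal (real n * c)" using Suc unfolding E_def c_def by simp
  have step: "emeasure (measure_pmf (map_pmf (\<lambda>r. x @ [(q x, r)]) (resp H \<theta> (n mod H + 1) (q x)))) E \<le> indicator E x + ennreal c"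
    if x: "x \<in> set_pmf (run H q \<theta> n)" for x
  proof (cases "nocoll x")
    case False
    have "emeasure (measure_pmf (map_pmf (\<lambda>r. x @ [(q x, r)]) (resp H \<theta> (n mod H + 1) (q x)))) E \<le> 1"
      by (simp add: measure_pmf.emeasure_le_1)
    also have "\<dots> \<le> indicator E x + ennreal c" using False unfolding E_def by simp
    finally show ?thesis .
  next
    case True
    have lx: "length x = n" using x by (simp add: run_support)
    have "emeasure (measure_pmf (map_pmf (\<lambda>r. x @ [(q x, r)]) (resp H \<theta> (n mod H + 1) (q x)))) E
        = emeasure (measure_pmf (resp H \<theta> (n mod H + 1) (q x))) {r. \<not> nocoll (x @ [(q x, r)])}"
      unfolding E_def by (simp add: vimage_def)
    also have "\<dots> \<le> ennreal c"
    proof (cases "n mod H + 1 < H")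
      case True
      have sub: "{r. \<not> nocoll (x @ [(q x, r)])} \<subseteq> {r. fst r \<in> Seen (n mod H + 2) x}"
        using \<open>nocoll x\<close> nocoll_snoc[of x] lx True by auto
      have fS: "finite (Seen (n mod H + 2) x)" and cS: "card (Seen (n mod H + 2) x) \<le> 2 * T"
        using card_Seen[of x] lx Suc.prems by auto
      have "emeasure (measure_pmf (resp H \<theta> (n mod H + 1) (q x))) {r. \<not> nocoll (x @ [(q x, r)])}
          \<le> emeasure (measure_pmf (resp H \<theta> (n mod H + 1) (q x))) {r. fst r \<in> Seen (n mod H + 2) x}"
        by (rule emeasure_mono[OF sub]) simp
      also have "\<dots> \<le> ennreal (real (card (Seen (n mod H + 2) x)) / real K)"
        using resp_coll[OF th _ True fS] by simp
      also have "\<dots> \<le> ennreal c" unfolding c_def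
        by (rule ennreal_leI, rule divide_right_mono) (use cS in auto)
      finally show ?thesis .
    next
      case False
      have e: "{r. \<not> nocoll (x @ [(q x, r)])} = {}" using \<open>nocoll x\<close> nocoll_snoc[of x] lx False by auto
      show ?thesis unfolding e by simp
    qed
    also have "\<dots> \<le> indicator E x + ennreal c" by simp
    finally show ?thesis .
  qed
  have "emeasure (measure_pmf (run H q \<theta> (Suc n))) E
      = (\<integral>\<^sup>+x. emeasure (measure_pmf (map_pmf (\<lambda>r. x @ [(q x, r)]) (resp H \<theta> (n mod H + 1) (q x)))) E \<partial>measure_pmf (run H q \<theta> n))"
    by simp
  also have "\<dots> \<le> (\<integral>\<^sup>+x. indicator E x + ennreal c \<partial>measure_pmf (run H q \<theta> n))"
    by (rule nn_integral_mono_AE) (unfold AE_measure_pmf_iff, use step in blast)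
  also have "\<dots> = emeasure (measure_pmf (run H q \<theta> n)) E + ennreal c"
    by (simp add: nn_integral_add measure_pmf.emeasure_space_1)
  also have "\<dots> \<le> ennreal (real n * c) + ennreal c" using IH by (simp add: add_right_mono)
  also have "\<dots> = ennreal (real (Suc n) * c)"
  proof -
    have "real (Suc n) * c = real n * c + c" by (simp add: distrib_right)
    moreover have "ennreal (real n * c + c) = ennreal (real n * c) + ennreal c"
      by (rule ennreal_plus) (use c0 in auto)
    ultimately show ?thesis by simp
  qed
  finally show ?case unfolding E_def c_def .
qed

lemma coll_bound:
  assumes th: "\<theta> \<in> Theta H b" and n: "n \<le> H * T"
  shows "measure_pmf.prob (run H q \<theta> n) {hs. \<not> nocoll hs} \<le> real n * (2 * real T / real K)"
  using coll_bound_e[OF th n] by (simp add: measure_pmf.emeasure_eq_measure)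

end


context L begin

definition Hist :: "nat \<Rightarrow> history set" where
  "Hist k = {hs. length hs = k \<and> cons hs \<and> (\<forall>j<k. snd (hs!j) \<in> Resp (j mod H + 1))}"

definition Bad :: "param \<Rightarrow> history \<Rightarrow> bool" where
  "Bad \<theta> hs = (\<exists>j<length hs. j mod H + 1 = H \<and> fst (fst (hs!j)) \<in> snd \<theta> H)"

definition RN :: "nat \<Rightarrow> nat" where
  "RN k = (\<Prod>j<k. if j mod H + 1 < H then N else 1)"

lemma card_Resp: "finite (Resp l)" "card (Resp l) \<le> (if l < H then N else 1)"
  unfolding Resp_def using card_image_le[of "{..<N}" "\<lambda>j. (j, False)"] by auto

lemma Hist_Suc: "Hist (Suc k) \<subseteq> (\<lambda>(hs, r). hs @ [(q hs, r)]) ` (Hist k \<times> Resp (k mod H + 1))"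
proof
  fix hs assume hs: "hs \<in> Hist (Suc k)"
  then obtain hs0 x where e: "hs = hs0 @ [x]" unfolding Hist_def by (metis (mono_tags, lifting) length_Suc_conv_rev mem_Collect_eq)
  have l: "length hs0 = k" using hs e unfolding Hist_def by simp
  have c: "cons hs0" "fst x = q hs0" using hs e cons_snoc unfolding Hist_def by auto
  have R: "\<forall>j<k. snd (hs0!j) \<in> Resp (j mod H + 1)"
  proof (intro allI impI)
    fix j assume j: "j < k"
    hence "snd (hs!j) \<in> Resp (j mod H + 1)" using hs unfolding Hist_def by simp
    thus "snd (hs0!j) \<in> Resp (j mod H + 1)" using j l e by (simp add: nth_append)
  qed
  have "snd (hs!k) \<in> Resp (k mod H + 1)" using hs unfolding Hist_def by simp
  hence Rx: "snd x \<in> Resp (k mod H + 1)" using e l[symmetric] by simp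
  have "hs0 \<in> Hist k" unfolding Hist_def using l c R by simp
  moreover have "hs = (\<lambda>(hs, r). hs @ [(q hs, r)]) (hs0, snd x)" using e c by (cases x) auto
  ultimately show "hs \<in> (\<lambda>(hs, r). hs @ [(q hs, r)]) ` (Hist k \<times> Resp (k mod H + 1))" using Rx by blast
qed

lemma Hist_card: "finite (Hist k) \<and> card (Hist k) \<le> RN k"
proof (induction k)
  case 0
  have "Hist 0 = {[]}" unfolding Hist_def cons_def by auto
  then show ?case by (simp add: RN_def)
next
  case (Suc k)
  have f: "finite ((\<lambda>(hs, r). hs @ [(q hs, r)]) ` (Hist k \<times> Resp (k mod H + 1)))"
    using Suc card_Resp by simp
  have "card (Hist (Suc k)) \<le> card ((\<lambda>(hs, r). hs @ [(q hs, r)]) ` (Hist k \<times> Resp (k mod H + 1)))"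
    by (rule card_mono[OF f Hist_Suc])
  also have "\<dots> \<le> card (Hist k \<times> Resp (k mod H + 1))" by (rule card_image_le) (use Suc card_Resp in simp)
  also have "\<dots> = card (Hist k) * card (Resp (k mod H + 1))" by (simp add: card_cartesian_product)
  also have "\<dots> \<le> RN k * (if k mod H + 1 < H then N else 1)"
    by (rule mult_le_mono) (use Suc card_Resp in auto)
  also have "\<dots> = RN (Suc k)" unfolding RN_def by simp
  finally show ?case using finite_subset[OF Hist_Suc f] by simp
qed

lemma RN_V: assumes dpos: "dd > 0" and dN: "dd \<le> real N" shows "real (RN k) * V k \<le> (real N / dd) ^ k"
proof -
  have "real (RN k) * V k = (\<Prod>j<k. (if j mod H + 1 < H then real N else 1) * (if j mod H + 1 < H then 1 / dd else 1))"
    unfolding RN_def V_def by (simp add: prod.distrib[symmetric] if_distrib cong: if_cong)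
  also have "\<dots> \<le> (\<Prod>j<k. real N / dd)"
  proof (rule prod_mono)
    fix j
    have "1 \<le> real N / dd" using dpos dN by simp
    thus "0 \<le> (if j mod H + 1 < H then real N else 1) * (if j mod H + 1 < H then 1 / dd else 1) \<and>
      (if j mod H + 1 < H then real N else 1) * (if j mod H + 1 < H then 1 / dd else 1) \<le> real N / dd"
      using dpos by auto
  qed
  finally show ?thesis by simp
qed

lemma supp_Hist:
  assumes th: "\<theta> \<in> Theta H b" and sp: "hs \<in> set_pmf (run H q \<theta> k)" and nb: "\<not> Bad \<theta> hs"
  shows "hs \<in> Hist k"
proof -
  have l: "length hs = k" and c: "cons hs" and R0: "\<forall>j<k. snd (hs!j) \<in> set_pmf (resp H \<theta> (j mod H + 1) (fst (hs!j)))"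
    using sp unfolding run_support cons_def by auto
  have "snd (hs!j) \<in> Resp (j mod H + 1)" if j: "j < k" for j
  proof -
    have "snd (hs!j) \<in> set_pmf (resp H \<theta> (j mod H + 1) (fst (hs!j)))" using R0 j by blast
    hence m: "pmf (resp H \<theta> (j mod H + 1) (fst (hs!j))) (snd (hs!j)) \<noteq> 0" by (metis set_pmf_iff)
    show ?thesis
    proof (cases "j mod H + 1 < H")
      case True
      have "pmf (resp H \<theta> (j mod H + 1) (fst (hs!j))) (snd (hs!j)) = (if \<not> snd (snd (hs!j)) \<and> fst (snd (hs!j)) < N \<and> (fst (snd (hs!j)) \<in> snd \<theta> (Suc (j mod H + 1))) = ty \<theta> (j mod H + 1) (fst (hs!j))
     then 1 / real (if ty \<theta> (j mod H + 1) (fst (hs!j)) then K else N - K) else 0)"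
        by (rule resp_lt[OF th _ True]) simp
      hence "snd (snd (hs!j)) = False \<and> fst (snd (hs!j)) < N" using m by (auto split: if_splits)
      then show ?thesis unfolding Resp_def using True by (cases "snd (hs!j)") auto
    next
      case False
      hence jH: "j mod H + 1 = H" using lay_le[of j] by simp
      have "fst (fst (hs!j)) \<notin> snd \<theta> H" using nb j l jH unfolding Bad_def by auto
      moreover have "pmf (resp H \<theta> H (fst (hs!j))) (snd (hs!j)) \<noteq> 0" using m jH by simp
      ultimately have "snd (hs!j) = (0, False)" unfolding resp_H[OF th] by (auto split: if_splits)
      then show ?thesis unfolding Resp_def using jH by simp
    qed
  qed
  thus ?thesis unfolding Hist_def using l c by simp
qed

lemma nocoll_take: "nocoll hs \<Longrightarrow> nocoll (take k hs)"
  unfolding nocoll_def by (auto simp: min_def)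

end


context L begin

definition Ev :: "param \<Rightarrow> history set" where
  "Ev \<theta> = {hs. nocoll hs \<and> \<not> Bad \<theta> hs \<and> fst (q hs) \<in> snd \<theta> H}"

definition Ks :: "nat set" where "Ks = {k. k < H * T \<and> k mod H + 1 = H}"

lemma Ks_fin: "finite Ks" "card Ks \<le> T"
proof -
  show "finite Ks" unfolding Ks_def by simp
  have "Ks \<subseteq> {j. j < H * T \<and> j mod H = H - 1}" unfolding Ks_def by auto
  hence "card Ks \<le> card {j. j < H * T \<and> j mod H = H - 1}" by (rule card_mono[rotated]) simp
  thus "card Ks \<le> T" using card_res[of "H - 1"] by simp
qed

lemma bad_incl:
  assumes sp: "hs \<in> set_pmf (run H q \<theta> (H * T))" and b: "Bad \<theta> hs"
  shows "hs \<in> {hs. \<not> nocoll hs} \<union> (\<Union>k\<in>Ks. take k -` Ev \<theta>)"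
proof (cases "nocoll hs")
  case False
  then show ?thesis by simp
next
  case True
  have l: "length hs = H * T" using sp by (simp add: run_support)
  define P where "P = (\<lambda>j. j < length hs \<and> j mod H + 1 = H \<and> fst (fst (hs!j)) \<in> snd \<theta> H)"
  have "\<exists>j. P j" using b unfolding Bad_def P_def by auto
  then obtain k where Pk: "P k" and mn: "\<And>j. j < k \<Longrightarrow> \<not> P j" by (metis exists_least_iff)
  have kK: "k \<in> Ks" using Pk l unfolding P_def Ks_def by simp
  have kl: "k < length hs" using Pk unfolding P_def by simp
  have "\<forall>j<H*T. fst (hs!j) = q (take j hs) \<and> snd (hs!j) \<in> set_pmf (resp H \<theta> (j mod H + 1) (fst (hs!j)))"
    using sp unfolding run_support by (rule conjunct2)
  hence "fst (hs!k) = q (take k hs)" using kl l by auto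
  hence qk: "fst (q (take k hs)) \<in> snd \<theta> H" using Pk unfolding P_def by simp
  have nb: "\<not> Bad \<theta> (take k hs)"
  proof
    assume "Bad \<theta> (take k hs)"
    then obtain j where "j < length (take k hs)" "j mod H + 1 = H" "fst (fst (take k hs ! j)) \<in> snd \<theta> H"
      unfolding Bad_def by blast
    hence "j < k" "P j" using kl unfolding P_def by auto
    thus False using mn by blast
  qed
  have "take k hs \<in> Ev \<theta>" unfolding Ev_def using nocoll_take[OF True] nb qk by simp
  thus ?thesis using kK by blast
qed

lemma bad_decomp:
  "measure_pmf.prob (run H q \<theta> (H * T)) {hs. Bad \<theta> hs}
     \<le> measure_pmf.prob (run H q \<theta> (H * T)) {hs. \<not> nocoll hs} + (\<Sum>k\<in>Ks. measure_pmf.prob (run H q \<theta> k) (Ev \<theta>))"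
proof -
  let ?M = "run H q \<theta> (H * T)"
  have "measure_pmf.prob ?M {hs. Bad \<theta> hs} = measure_pmf.prob ?M ({hs. Bad \<theta> hs} \<inter> set_pmf ?M)"
    by (rule measure_Int_set_pmf[symmetric])
  also have "\<dots> \<le> measure_pmf.prob ?M ({hs. \<not> nocoll hs} \<union> (\<Union>k\<in>Ks. take k -` Ev \<theta>))"
  proof (rule measure_pmf.finite_measure_mono)
    show "{hs. Bad \<theta> hs} \<inter> set_pmf ?M \<subseteq> {hs. \<not> nocoll hs} \<union> (\<Union>k\<in>Ks. take k -` Ev \<theta>)"
      using bad_incl[of _ \<theta>] by blast
  qed simp
  also have "\<dots> \<le> measure_pmf.prob ?M {hs. \<not> nocoll hs} + measure_pmf.prob ?M (\<Union>k\<in>Ks. take k -` Ev \<theta>)"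
    by (rule measure_subadditive) (auto simp: measure_pmf.emeasure_finite)
  also have "measure_pmf.prob ?M (\<Union>k\<in>Ks. take k -` Ev \<theta>) \<le> (\<Sum>k\<in>Ks. measure_pmf.prob ?M (take k -` Ev \<theta>))"
    by (rule measure_pmf.finite_measure_subadditive_finite) (auto simp: Ks_fin)
  also have "(\<Sum>k\<in>Ks. measure_pmf.prob ?M (take k -` Ev \<theta>)) = (\<Sum>k\<in>Ks. measure_pmf.prob (run H q \<theta> k) (Ev \<theta>))"
  proof (rule sum.cong[OF refl])
    fix k assume "k \<in> Ks"
    hence "k \<le> H * T" unfolding Ks_def by simp
    hence "map_pmf (take k) ?M = run H q \<theta> k" by (rule map_take_run)
    thus "measure_pmf.prob ?M (take k -` Ev \<theta>) = measure_pmf.prob (run H q \<theta> k) (Ev \<theta>)"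
      by (metis measure_map_pmf)
  qed
  finally show ?thesis by simp
qed

lemma sumEv:
  assumes dpos: "dd > 0" and dN: "dd \<le> real N" and d2: "(real N / dd) ^ (H * T) \<le> 2" and k: "k < H * T"
  shows "(\<Sum>\<theta>\<in>Theta H b. measure_pmf.prob (run H q \<theta> k) (Ev \<theta>)) \<le> real (card (Theta H b)) * (4 / 2^H)"
proof -
  define S where "S = {hs \<in> Hist k. nocoll hs}"
  have fH: "finite (Hist k)" and cH: "card (Hist k) \<le> RN k" using Hist_card by auto
  have fS: "finite S" unfolding S_def using fH by simp
  have one: "measure_pmf.prob (run H q \<theta> k) (Ev \<theta>) \<le> (\<Sum>hs\<in>S. Pr \<theta> hs * of_bool (fst (q hs) \<in> snd \<theta> H))"
    if th: "\<theta> \<in> Theta H b" for \<theta>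
  proof -
    have "measure_pmf.prob (run H q \<theta> k) (Ev \<theta>) = measure_pmf.prob (run H q \<theta> k) (Ev \<theta> \<inter> set_pmf (run H q \<theta> k))"
      by (rule measure_Int_set_pmf[symmetric])
    also have "\<dots> \<le> measure_pmf.prob (run H q \<theta> k) {hs \<in> S. fst (q hs) \<in> snd \<theta> H}"
      by (rule measure_pmf.finite_measure_mono) (auto simp: Ev_def S_def intro: supp_Hist[OF th])
    also have "\<dots> = (\<Sum>hs\<in>{hs \<in> S. fst (q hs) \<in> snd \<theta> H}. pmf (run H q \<theta> k) hs)"
      by (rule measure_measure_pmf_finite) (use fS in simp)
    also have "\<dots> = (\<Sum>hs\<in>{hs \<in> S. fst (q hs) \<in> snd \<theta> H}. Pr \<theta> hs)"
      by (rule sum.cong[OF refl]) (auto simp: Pr_def S_def Hist_def)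
    also have "\<dots> = (\<Sum>hs\<in>S. Pr \<theta> hs * of_bool (fst (q hs) \<in> snd \<theta> H))"
      using fS by (simp add: sum.inter_filter sum.inter_restrict if_distrib cong: if_cong)
    finally show ?thesis .
  qed
  have "(\<Sum>\<theta>\<in>Theta H b. measure_pmf.prob (run H q \<theta> k) (Ev \<theta>))
      \<le> (\<Sum>\<theta>\<in>Theta H b. \<Sum>hs\<in>S. Pr \<theta> hs * of_bool (fst (q hs) \<in> snd \<theta> H))"
    by (rule sum_mono) (rule one)
  also have "\<dots> = (\<Sum>hs\<in>S. \<Sum>\<theta>\<in>Theta H b. Pr \<theta> hs * of_bool (fst (q hs) \<in> snd \<theta> H))"
    by (rule sum.swap)
  also have "\<dots> \<le> (\<Sum>hs\<in>S. V k * real (card (Theta H b)) * (2 / 2^H))"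
  proof (rule sum_mono)
    fix hs assume "hs \<in> S"
    hence hs: "cons hs" "\<forall>j<length hs. snd (hs!j) \<in> Resp (j mod H + 1)" "nocoll hs" "length hs = k"
      unfolding S_def Hist_def by auto
    show "(\<Sum>\<theta>\<in>Theta H b. Pr \<theta> hs * of_bool (fst (q hs) \<in> snd \<theta> H)) \<le> V k * real (card (Theta H b)) * (2 / 2^H)"
      using perhs[OF hs(1,2,3) _ dpos] hs(4) k by simp
  qed
  also have "\<dots> = real (card S) * V k * real (card (Theta H b)) * (2 / 2^H)" by simp
  also have "\<dots> \<le> real (RN k) * V k * real (card (Theta H b)) * (2 / 2^H)"
  proof -
    have "card S \<le> RN k" using cH card_mono[OF fH, of S] unfolding S_def by auto
    thus ?thesis using V_nonneg[OF dpos, of k] by (intro mult_right_mono) auto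
  qed
  also have "\<dots> \<le> 2 * real (card (Theta H b)) * (2 / 2^H)"
  proof -
    have "real (RN k) * V k \<le> (real N / dd) ^ k" by (rule RN_V[OF dpos dN])
    also have "\<dots> \<le> (real N / dd) ^ (H * T)" by (rule power_increasing) (use k dpos dN in auto)
    finally have "real (RN k) * V k \<le> 2" using d2 by simp
    thus ?thesis by (intro mult_right_mono) auto
  qed
  also have "\<dots> = real (card (Theta H b)) * (4 / 2^H)" by simp
  finally show ?thesis .
qed

lemma avg_bad:
  assumes dpos: "dd > 0" and dN: "dd \<le> real N" and d2: "(real N / dd) ^ (H * T) \<le> 2"
  shows "(\<Sum>\<theta>\<in>Theta H b. measure_pmf.prob (run H q \<theta> (H * T)) {hs. Bad \<theta> hs})
     \<le> real (card (Theta H b)) * (real (H * T) * (2 * real T / real K) + real T * (4 / 2^H))"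
proof -
  have "(\<Sum>\<theta>\<in>Theta H b. measure_pmf.prob (run H q \<theta> (H * T)) {hs. Bad \<theta> hs})
     \<le> (\<Sum>\<theta>\<in>Theta H b. measure_pmf.prob (run H q \<theta> (H * T)) {hs. \<not> nocoll hs} + (\<Sum>k\<in>Ks. measure_pmf.prob (run H q \<theta> k) (Ev \<theta>)))"
    by (rule sum_mono) (rule bad_decomp)
  also have "\<dots> = (\<Sum>\<theta>\<in>Theta H b. measure_pmf.prob (run H q \<theta> (H * T)) {hs. \<not> nocoll hs}) + (\<Sum>k\<in>Ks. \<Sum>\<theta>\<in>Theta H b. measure_pmf.prob (run H q \<theta> k) (Ev \<theta>))"
    by (simp add: sum.distrib sum.swap[of _ _ Ks])
  also have "\<dots> \<le> (\<Sum>\<theta>\<in>Theta H b. real (H * T) * (2 * real T / real K)) + (\<Sum>k\<in>Ks. real (card (Theta H b)) * (4 / 2^H))"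
  proof (rule add_mono)
    show "(\<Sum>\<theta>\<in>Theta H b. measure_pmf.prob (run H q \<theta> (H * T)) {hs. \<not> nocoll hs}) \<le> (\<Sum>\<theta>\<in>Theta H b. real (H * T) * (2 * real T / real K))"
      by (rule sum_mono) (rule coll_bound, auto)
    show "(\<Sum>k\<in>Ks. \<Sum>\<theta>\<in>Theta H b. measure_pmf.prob (run H q \<theta> k) (Ev \<theta>)) \<le> (\<Sum>k\<in>Ks. real (card (Theta H b)) * (4 / 2^H))"
      by (rule sum_mono) (rule sumEv[OF dpos dN d2], simp add: Ks_def)
  qed
  also have "\<dots> = real (card (Theta H b)) * (real (H * T) * (2 * real T / real K)) + real (card Ks) * (real (card (Theta H b)) * (4 / 2^H))"
    by simp
  also have "\<dots> \<le> real (card (Theta H b)) * (real (H * T) * (2 * real T / real K)) + real T * (real (card (Theta H b)) * (4 / 2^H))"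
    by (rule add_left_mono, rule mult_right_mono) (use Ks_fin in auto)
  also have "\<dots> = real (card (Theta H b)) * (real (H * T) * (2 * real T / real K) + real T * (4 / 2^H))"
    by (simp add: algebra_simps)
  finally show ?thesis .
qed

end


context L begin

lemma run_fin: assumes th: "\<theta> \<in> Theta H b" shows "finite (set_pmf (run H q \<theta> k))"
proof (induction k)
  case 0
  then show ?case by simp
next
  case (Suc k)
  have "finite (set_pmf (resp H \<theta> (k mod H + 1) qa))" for qa
  proof (cases "k mod H + 1 < H")
    case True
    define A where "A = {j. j < N \<and> (j \<in> snd \<theta> (Suc (k mod H + 1))) = ty \<theta> (k mod H + 1) qa}"
    have "card A \<ge> K" unfolding A_def by (rule card_A_ge[OF th _ True]) simp
    hence "A \<noteq> {}" using Kpos by auto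
    moreover have "finite A" unfolding A_def by simp
    moreover have "resp H \<theta> (k mod H + 1) qa = map_pmf (\<lambda>j. (j, False)) (pmf_of_set A)"
      unfolding A_def by (rule resp_lt_eq[OF th _ True]) simp
    ultimately show ?thesis by simp
  next
    case False
    then show ?thesis unfolding resp_def Let_def by simp
  qed
  then show ?case using Suc by simp
qed

lemma law_prob:
  assumes th: "Theta H b \<noteq> {}"
  shows "measure_pmf.prob (law H T q out (pmf_of_set (Theta H b))) A
    = (\<Sum>\<theta>\<in>Theta H b. measure_pmf.prob (run H q \<theta> (H * T)) {hs. (hs, out hs) \<in> A}) / real (card (Theta H b))"
proof -
  have "measure_pmf.prob (law H T q out (pmf_of_set (Theta H b))) A
      = measure_pmf.expectation (law H T q out (pmf_of_set (Theta H b))) (indicator A)" by simp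
  also have "\<dots> = (\<Sum>\<theta>\<in>Theta H b. measure_pmf.expectation (map_pmf (\<lambda>hs. (hs, out hs)) (run H q \<theta> (H * T))) (indicator A) /\<^sub>R real (card (Theta H b)))"
    unfolding law_def by (rule pmf_expectation_bind_pmf_of_set) (use th Theta_fin run_fin in auto)
  also have "\<dots> = (\<Sum>\<theta>\<in>Theta H b. measure_pmf.prob (run H q \<theta> (H * T)) {hs. (hs, out hs) \<in> A}) / real (card (Theta H b))"
    by (simp add: sum_divide_distrib vimage_def divide_inverse mult.commute sum_distrib_left)
  finally show ?thesis .
qed

lemma flip_H: "\<theta> \<in> Theta H b \<Longrightarrow> flip H \<theta> \<in> Theta H (\<not> b)"
  unfolding Theta_def flip_def using H2 by (auto simp: subset_iff)

lemma Bad_flip: "Bad (flip H \<theta>) hs = Bad \<theta> hs" unfolding Bad_def flip_def by simp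

lemma pmf_flip:
  assumes th: "\<theta> \<in> Theta H b" and nb: "\<not> Bad \<theta> hs"
  shows "pmf (run H q (flip H \<theta>) n) hs = pmf (run H q \<theta> n) hs"
proof (cases "length hs = n")
  case False
  then show ?thesis by (simp add: pmf_run_len)
next
  case True
  have th': "flip H \<theta> \<in> Theta H (\<not> b)" by (rule flip_H[OF th])
  have "Pr (flip H \<theta>) hs = Pr \<theta> hs"
  proof -
    have "pmf (resp H (flip H \<theta>) (j mod H + 1) (fst (hs!j))) (snd (hs!j)) = pmf (resp H \<theta> (j mod H + 1) (fst (hs!j))) (snd (hs!j))"
      if j: "j < length hs" for j
    proof (cases "j mod H + 1 < H")
      case True
      have "ty (flip H \<theta>) (j mod H + 1) (fst (hs!j)) = ty \<theta> (j mod H + 1) (fst (hs!j))"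
        unfolding ty_def flip_def using True by simp
      moreover have "snd (flip H \<theta>) = snd \<theta>" by (simp add: flip_def)
      ultimately show ?thesis using resp_lt[OF th _ True] resp_lt[OF th' _ True] by simp
    next
      case False
      hence jH: "j mod H + 1 = H" using lay_le[of j] by simp
      have "fst (fst (hs!j)) \<notin> snd \<theta> H" using nb j jH unfolding Bad_def by auto
      then show ?thesis unfolding jH resp_H[OF th] resp_H[OF th'] by (simp add: flip_def)
    qed
    thus ?thesis unfolding Pr_prod by (auto intro!: prod.cong)
  qed
  then show ?thesis using True unfolding Pr_def by simp
qed

lemma step1_pair:
  assumes th: "\<theta> \<in> Theta H b"
  shows "\<bar>measure_pmf.prob (run H q \<theta> n) X - measure_pmf.prob (run H q (flip H \<theta>) n) X\<bar>
    \<le> measure_pmf.prob (run H q \<theta> n) {hs. Bad \<theta> hs} + measure_pmf.prob (run H q (flip H \<theta>) n) {hs. Bad (flip H \<theta>) hs}"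
proof -
  let ?M = "run H q \<theta> n" and ?M' = "run H q (flip H \<theta>) n"
  define B where "B = {hs. Bad \<theta> hs}"
  have B': "{hs. Bad (flip H \<theta>) hs} = B" unfolding B_def Bad_flip ..
  have eq: "measure_pmf.prob ?M (X - B) = measure_pmf.prob ?M' (X - B)"
    unfolding measure_pmf_conv_infsetsum by (rule infsetsum_cong) (use pmf_flip[OF th] in \<open>auto simp: B_def\<close>)
  have d1: "measure_pmf.prob ?M X = measure_pmf.prob ?M (X - B) + measure_pmf.prob ?M (X \<inter> B)"
    by (subst measure_pmf.finite_measure_Union[symmetric]) (auto intro: arg_cong[where f="measure _"])
  have d2: "measure_pmf.prob ?M' X = measure_pmf.prob ?M' (X - B) + measure_pmf.prob ?M' (X \<inter> B)"
    by (subst measure_pmf.finite_measure_Union[symmetric]) (auto intro: arg_cong[where f="measure _"])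
  have m1: "measure_pmf.prob ?M (X \<inter> B) \<le> measure_pmf.prob ?M B" by (rule measure_pmf.finite_measure_mono) auto
  have m2: "measure_pmf.prob ?M' (X \<inter> B) \<le> measure_pmf.prob ?M' B" by (rule measure_pmf.finite_measure_mono) auto
  have "\<bar>measure_pmf.prob ?M X - measure_pmf.prob ?M' X\<bar> = \<bar>measure_pmf.prob ?M (X \<inter> B) - measure_pmf.prob ?M' (X \<inter> B)\<bar>"
    using d1 d2 eq by simp
  also have "\<dots> \<le> measure_pmf.prob ?M B + measure_pmf.prob ?M' B"
  proof -
    have "measure_pmf.prob ?M (X \<inter> B) \<ge> 0" "measure_pmf.prob ?M' (X \<inter> B) \<ge> 0" by auto
    thus ?thesis using m1 m2 by (simp only: abs_le_iff, intro conjI; linarith)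
  qed
  finally show ?thesis unfolding B' B_def .
qed

lemma step1:
  "dTV (law H T q out (pmf_of_set (Theta H False))) (law H T q out (pmf_of_set (Theta H True)))
   \<le> ((\<Sum>\<theta>\<in>Theta H False. measure_pmf.prob (run H q \<theta> (H * T)) {hs. Bad \<theta> hs})
    + (\<Sum>\<theta>\<in>Theta H True. measure_pmf.prob (run H q \<theta> (H * T)) {hs. Bad \<theta> hs})) / real (card (Theta H False))"
  unfolding dTV_def
proof (rule cSUP_least)
  show "UNIV \<noteq> {}" by simp
  fix A
  define g where "g = (\<lambda>\<theta>. measure_pmf.prob (run H q \<theta> (H * T)) {hs. (hs, out hs) \<in> A})"
  define P where "P = (\<lambda>\<theta>. measure_pmf.prob (run H q \<theta> (H * T)) {hs. Bad \<theta> hs})"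
  have ne: "Theta H c \<noteq> {}" for c using Theta_ne H2 by simp
  have bij: "bij_betw (flip H) (Theta H False) (Theta H True)"
    by (rule bij_betw_byWitness[of _ "flip H"]) (auto dest: flip_H)
  have cc: "card (Theta H True) = card (Theta H False)" using bij_betw_same_card[OF bij] by simp
  have s1: "(\<Sum>\<theta>\<in>Theta H True. f \<theta>) = (\<Sum>\<theta>\<in>Theta H False. f (flip H \<theta>))" for f :: "param \<Rightarrow> real"
    using sum.reindex_bij_betw[OF bij, of f] by simp
  have "\<bar>(\<Sum>\<theta>\<in>Theta H False. g \<theta>) - (\<Sum>\<theta>\<in>Theta H True. g \<theta>)\<bar> = \<bar>\<Sum>\<theta>\<in>Theta H False. g \<theta> - g (flip H \<theta>)\<bar>"
    by (simp add: s1 sum_subtractf)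
  also have "\<dots> \<le> (\<Sum>\<theta>\<in>Theta H False. \<bar>g \<theta> - g (flip H \<theta>)\<bar>)" by (rule sum_abs)
  also have "\<dots> \<le> (\<Sum>\<theta>\<in>Theta H False. P \<theta> + P (flip H \<theta>))"
    by (rule sum_mono) (unfold g_def P_def, rule step1_pair, simp)
  also have "\<dots> = (\<Sum>\<theta>\<in>Theta H False. P \<theta>) + (\<Sum>\<theta>\<in>Theta H True. P \<theta>)" by (simp add: s1 sum.distrib)
  finally have main: "\<bar>(\<Sum>\<theta>\<in>Theta H False. g \<theta>) - (\<Sum>\<theta>\<in>Theta H True. g \<theta>)\<bar> \<le> (\<Sum>\<theta>\<in>Theta H False. P \<theta>) + (\<Sum>\<theta>\<in>Theta H True. P \<theta>)" .
  have cp: "real (card (Theta H False)) > 0" using ne[of False] Theta_fin by (simp add: card_gt_0_iff)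
  have "\<bar>measure_pmf.prob (law H T q out (pmf_of_set (Theta H False))) A - measure_pmf.prob (law H T q out (pmf_of_set (Theta H True))) A\<bar>
      = \<bar>(\<Sum>\<theta>\<in>Theta H False. g \<theta>) - (\<Sum>\<theta>\<in>Theta H True. g \<theta>)\<bar> / real (card (Theta H False))"
    unfolding law_prob[OF ne] g_def cc by (simp add: diff_divide_distrib[symmetric])
  also have "\<dots> \<le> ((\<Sum>\<theta>\<in>Theta H False. P \<theta>) + (\<Sum>\<theta>\<in>Theta H True. P \<theta>)) / real (card (Theta H False))"
    by (rule divide_right_mono[OF main]) simp
  finally show "\<bar>measure_pmf.prob (law H T q out (pmf_of_set (Theta H False))) A - measure_pmf.prob (law H T q out (pmf_of_set (Theta H True))) A\<bar>
    \<le> ((\<Sum>\<theta>\<in>Theta H False. measure_pmf.prob (run H q \<theta> (H * T)) {hs. Bad \<theta> hs})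
    + (\<Sum>\<theta>\<in>Theta H True. measure_pmf.prob (run H q \<theta> (H * T)) {hs. Bad \<theta> hs})) / real (card (Theta H False))"
    unfolding P_def .
qed

end


lemma dTV_le_1: "dTV p q \<le> 1"
  unfolding dTV_def
proof (rule cSUP_least)
  show "UNIV \<noteq> {}" by simp
  fix A
  have "measure_pmf.prob p A \<le> 1" "measure_pmf.prob q A \<le> 1" "measure_pmf.prob p A \<ge> 0" "measure_pmf.prob q A \<ge> 0"
    by auto
  thus "\<bar>measure_pmf.prob p A - measure_pmf.prob q A\<bar> \<le> 1" by (simp only: abs_le_iff, intro conjI; linarith)
qed

lemma dTV_same: "dTV p p = 0" unfolding dTV_def by simp

lemma law_T0: "law H 0 q out \<nu> = return_pmf ([], out [])"
  unfolding law_def by simp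

lemma powr_eq: "2 powr (real H - 9) = 2 ^ H / (512::real)"
proof -
  have "2 powr (real H - 9) = 2 powr real H / 2 powr 9" by (rule powr_diff)
  also have "2 powr real H = (2::real) ^ H" by (simp add: powr_realpow)
  also have "(2::real) powr 9 = 2 ^ 9" using powr_realpow[of 2 9] by simp
  finally show ?thesis by simp
qed

lemma bern:
  fixes n :: nat and x :: real
  assumes "0 \<le> x" "real n * x \<le> 1 / 2"
  shows "(1 / (1 - x)) ^ n \<le> 2"
proof -
  have x1: "x \<le> 1 / 2 \<or> n = 0"
  proof (cases "n = 0")
    case False
    hence "1 \<le> real n" by simp
    hence "x \<le> real n * x" using assms(1) by (simp add: mult_le_cancel_right1)
    thus ?thesis using assms(2) by simp
  qed simp
  show ?thesis
  proof (cases "n = 0")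
    case True then show ?thesis by simp
  next
    case False
    hence xh: "x \<le> 1/2" using x1 by simp
    have "1 + real n * (- x) \<le> (1 + (- x)) ^ n" by (rule Bernoulli_inequality) (use xh in simp)
    hence "1 / 2 \<le> (1 - x) ^ n" using assms by simp
    moreover have "(1 - x) ^ n > 0" using xh by simp
    ultimately have "1 / (1 - x) ^ n \<le> 2" by (simp add: divide_le_eq mult.commute)
    thus ?thesis by (simp add: power_one_over)
  qed
qed

theorem lemma5:
  fixes H T :: nat
    and q :: "history \<Rightarrow> query" and out :: "history \<Rightarrow> bool list"
  assumes "H \<ge> 1"
    and "\<And>hs. fst (q hs) < nobs H"
  shows "dTV (law H T q out (pmf_of_set (Theta H False)))
             (law H T q out (pmf_of_set (Theta H True)))
         \<le> real T ^ 4 * real H / 2 powr (real H - 9)"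
proof (cases "T = 0")
  case True
  then show ?thesis by (simp add: law_T0 dTV_same)
next
  case False
  hence T1: "real T \<ge> 1" by simp
  have R: "real T ^ 4 * real H / 2 powr (real H - 9) = 512 * real H * real T ^ 4 / 2 ^ H"
    unfolding powr_eq by simp
  show ?thesis
  proof (cases "2 ^ H \<le> 512 * real H * real T ^ 4")
    case True
    hence "1 \<le> 512 * real H * real T ^ 4 / 2 ^ H" by simp
    then show ?thesis using dTV_le_1 R by (metis order_trans)
  next
    case big: False
    let ?K = "(2::real) ^ H"
    have T4: "real T \<le> real T ^ 4" "real T ^ 2 \<le> real T ^ 4" using T1 by (simp_all add: power_increasing[of 1 4 "real T", simplified] power_increasing[of 2 4 "real T", simplified])
    have HT: "real H * real T ^ 4 < ?K / 512" using big by simp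
    have H2: "2 \<le> H"
    proof (rule ccontr)
      assume "\<not> 2 \<le> H"
      hence "H = 1" using assms(1) by simp
      moreover have "real T ^ 4 \<ge> 1" using T1 by simp
      ultimately show False using HT by simp
    qed
    interpret L H T q using H2 assms(2) by unfold_locales auto
    have NK: "real N = ?K * ?K" unfolding NKK by simp
    have K2: "?K \<ge> 2" using H2 by (metis power_increasing[of 1 H "2::real"] le_trans power_one_right less_imp_le one_le_numeral numeral_le_iff semiring_norm(69) H2 Suc_1 Suc_leD)
    have small: "real H * real T * (2 * real T + 1) \<le> ?K / 2"
    proof -
      have "real T * 1 \<le> real T * real T" by (rule mult_left_mono) (use T1 in auto)
      hence "real H * (real T * 1) \<le> real H * (real T * real T)" by (rule mult_left_mono) simp
      hence "real H * real T * (2 * real T + 1) \<le> real H * (3 * real T ^ 2)"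
        by (simp add: power2_eq_square algebra_simps)
      also have "\<dots> \<le> 3 * (real H * real T ^ 4)" using mult_left_mono[OF T4(2), of "real H"] by simp
      also have "\<dots> \<le> ?K / 2"
      proof -
        have "real H * real T ^ 4 \<ge> 0" by simp
        thus ?thesis using HT by linarith
      qed
      finally show ?thesis .
    qed
    define x where "x = (2 * real T + 1) / real N"
    have Npos: "real N > 0" using NK K2 by simp
    have x0: "0 \<le> x" unfolding x_def using Npos by simp
    have nx: "real (H * T) * x \<le> 1 / 2"
    proof -
      have "real (H * T) * x = real H * real T * (2 * real T + 1) / real N" unfolding x_def by simp
      also have "\<dots> \<le> (?K / 2) / real N" by (rule divide_right_mono[OF small]) (use Npos in simp)
      also have "\<dots> = 1 / (2 * ?K)" unfolding NK using K2 by (simp add: field_simps)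
      also have "\<dots> \<le> 1 / 2" using K2 by (simp add: field_simps)
      finally show ?thesis .
    qed
    have ddx: "dd = real N * (1 - x)" unfolding dd_def x_def using Npos by (simp add: field_simps)
    have x1: "x < 1"
    proof -
      have "1 * 1 \<le> real H * real T" by (rule mult_mono) (use T1 H2 in auto)
      hence "1 \<le> real H * real T" by simp
      hence "1 * (2 * real T + 1) \<le> real H * real T * (2 * real T + 1)" by (rule mult_right_mono) simp
      hence "real H * real T * (2 * real T + 1) \<ge> 2 * real T + 1" by simp
      hence "2 * real T + 1 \<le> ?K / 2" using small by linarith
      moreover have "?K / 2 < real N" unfolding NK using K2 by (simp add: field_simps)
      ultimately show ?thesis unfolding x_def using Npos by simp
    qed
    have dpos: "dd > 0" unfolding ddx using Npos x1 by simp
    have dN: "dd \<le> real N" unfolding ddx using Npos x0 by (simp add: mult_le_cancel_left1)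
    have d2: "(real N / dd) ^ (H * T) \<le> 2"
    proof -
      have "real N / dd = 1 / (1 - x)" unfolding ddx using Npos by simp
      thus ?thesis using bern[OF x0 nx] by simp
    qed
    define X where "X = real (H * T) * (2 * real T / real K) + real T * (4 / 2^H)"
    have bij: "bij_betw (flip H) (Theta H False) (Theta H True)"
      by (rule bij_betw_byWitness[of _ "flip H"]) (auto dest: flip_H)
    have cc: "card (Theta H True) = card (Theta H False)" using bij_betw_same_card[OF bij] by simp
    have cp: "real (card (Theta H False)) > 0" using Theta_ne[of H False] assms(1) Theta_fin by (simp add: card_gt_0_iff)
    have "dTV (law H T q out (pmf_of_set (Theta H False))) (law H T q out (pmf_of_set (Theta H True)))
        \<le> (real (card (Theta H False)) * X + real (card (Theta H True)) * X) / real (card (Theta H False))"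
      by (rule order_trans[OF step1], rule divide_right_mono, rule add_mono)
         (use avg_bad[OF dpos dN d2] in \<open>simp_all add: X_def\<close>)
    also have "\<dots> = 2 * X" unfolding cc using cp by (simp add: field_simps)
    also have "\<dots> = (4 * real H * real T ^ 2 + 8 * real T) / 2 ^ H" unfolding X_def by (simp add: field_simps power2_eq_square)
    also have "\<dots> \<le> 512 * real H * real T ^ 4 / 2 ^ H"
    proof (rule divide_right_mono)
      have "4 * real H * real T ^ 2 \<le> 4 * real H * real T ^ 4" using mult_left_mono[OF T4(2), of "4 * real H"] by simp
      moreover have "8 * real T \<le> 8 * real H * real T ^ 4"
      proof -
        have "1 * real T \<le> real H * real T ^ 4" by (rule mult_mono) (use T4 H2 in auto)
        thus ?thesis by simp
      qed
      ultimately show "4 * real H * real T ^ 2 + 8 * real T \<le> 512 * real H * real T ^ 4" by linarith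
    qed simp
    finally show ?thesis using R by simp
  qed
qed

end
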